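(* Let $N$ be a positive integer and $\boldsymbol{c}=(c_1,\dots,c_{2s})$ an index of even depth $2s\ge2$. Then \[ \sum_{\substack{A\subset[2s]^{>1}_{\boldsymbol{c}}\\ \{2r-1,2r\}\not\subset A\ (r\in[s])}}\frac{(-1)^{\#A}}{N^{\#A}}f_N(\boldsymbol{c}-\boldsymbol{\delta}_A)=\sum_{\substack{A\subset[2s]^1_{\boldsymbol{c}}\\ A\text{ odd-even}}}\frac{(-1)^{\#A/2}}{N^{\#A}}h_N(\boldsymbol{c}_{(-A)}). \]
   Context: $[n]=\{1,\dots,n\}$, $[n]_0=[n]\cup\{0\}$. An index is a tuple of positive integers; for $\boldsymbol{k}=(k_1,\dots,k_r)$ admissible (nonempty, last entry $\ge2$), $[r]^1_{\boldsymbol{k}}=\{i:k_i=1\}$, $S_{r,N}(A)=\{(n_i)\in[N-1]^r: n_i\le n_{i+1}\ (i\in A),\ n_i<n_{i+1}\ (i\in[r-1]\setminus A)\}$, $\zeta^\diamondsuit_N(\boldsymbol{k})=\sum_{A\subset[r]^1_{\boldsymbol{k}}}\sum_{S_{r,N}(A)}\prod_{i\in A}(N-n_i)^{-1}\prod_{i\notin A}n_i^{-k_i}$. For an even-depth index $\boldsymbol{d}=(d_1,\dots,d_{2t})$: $f_N(\boldsymbol{d})=\zeta^\diamondsuit_N(\{1\}^{d_1-1},d_2+1,\dots,\{1\}^{d_{2t-1}-1},d_{2t}+1)$. For $\boldsymbol{n}=(n_{i,j})_{i\in[2t],j\in[d_i]}$ and $A\subset[2t]$, $P_{N,\boldsymbol{d}}(\boldsymbol{n};A)=\prod_{i\in[2t]\setminus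 A,\,i\text{ odd}}\prod_{j\in[d_i]}(N-n_{i,j})^{-1}\cdot\prod_{i\in[2t]\setminus A,\,i\text{ even}}\prod_{j\in[d_i]}n_{i,j}^{-1}$, and \[ h_N(\boldsymbol{d})=\sum_{A\subset[2t]^1_{\boldsymbol{d}}}\frac1{N^{\#A}}\sum_{\substack{0\le n_{i,1}\le\cdots\le n_{i,d_i}<N\ (i\in[2t])\\ n_{i,d_i}<n_{i+1,1}\ (i\in[2t-1]_0,\ i+1\notin A)\\ n_{i,d_i}=n_{i+1,1}\ (i\in[2t-1]_0,\ i+1\in A)}}P_{N,\boldsymbol{d}}(\boldsymbol{n};A), \] where $n_{0,d_0}$ is read as $0$ and the $n_{i,j}$ are integers; $h_N(\varnothing)=1$. For an index $\boldsymbol{c}=(c_1,\dots,c_r)$: $[r]^1_{\boldsymbol{c}}=\{i:c_i=1\}$, $[r]^{>1}_{\boldsymbol{c}}=\{i:c_i>1\}$; $\boldsymbol{c}-\boldsymbol{\delta}_A=(c_1-\delta_{1\in A},\dots,c_r-\delta_{r\in A})$ with $\delta_{i\in A}=1$ if $i\in A$ else $0$; for $A\subset[r]$ with $[r]\setminus A=\{i_1<\dots<i_t\}$, $\boldsymbol{c}_{(-A)}=(c_{i_1},\dots,c_{i_t})$. $A\subset[2s]$ is odd-even if (odd $i\in A\Rightarrow i+1\in A$) and (even $i\in A\Rightarrow i-1\in A$). *)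

theory Defs
  imports Complex_Main
begin

text \<open>Indices are lists of positive naturals; the i-th entry (1-based) of k is k ! (i-1).\<close>

definition S_set :: "nat \<Rightarrow> nat \<Rightarrow> nat set \<Rightarrow> (nat \<Rightarrow> nat) set" where
  "S_set N r A = {n. (\<forall>i. (i \<in> {1..r} \<longrightarrow> 1 \<le> n i \<and> n i \<le> N - 1) \<and> (i \<notin> {1..r} \<longrightarrow> n i = 0))
      \<and> (\<forall>i\<in>{1..<r}. (i \<in> A \<longrightarrow> n i \<le> n (i+1)) \<and> (i \<notin> A \<longrightarrow> n i < n (i+1)))}"

definition zeta_diamond :: "nat \<Rightarrow> nat list \<Rightarrow> real" where
  "zeta_diamond N k =
     (\<Sum>A\<in>Pow {i\<in>{1..length k}. k ! (i-1) = 1}.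
        \<Sum>n\<in>S_set N (length k) A.
          (\<Prod>i\<in>A. 1 / (real N - real (n i))) *
          (\<Prod>i\<in>{1..length k} - A. 1 / real (n i) ^ (k ! (i-1))))"

definition fN :: "nat \<Rightarrow> nat list \<Rightarrow> real" where
  "fN N d = zeta_diamond N
     (concat (map (\<lambda>r. replicate (d ! (2*r) - 1) 1 @ [d ! (2*r+1) + 1]) [0..<length d div 2]))"

text \<open>Arrays n_{i,j} (i in [length d], j in [d_i]) are functions, zero outside the index range.\<close>
definition H_set :: "nat \<Rightarrow> nat list \<Rightarrow> nat set \<Rightarrow> (nat \<Rightarrow> nat \<Rightarrow> nat) set" where
  "H_set N d A = {n. (\<forall>i j. \<not> (i \<in> {1..length d} \<and> j \<in> {1..d ! (i-1)}) \<longrightarrow> n i j = 0)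
      \<and> (\<forall>i\<in>{1..length d}. (\<forall>j\<in>{1..<d ! (i-1)}. n i j \<le> n i (j+1))
                           \<and> (\<forall>j\<in>{1..d ! (i-1)}. n i j < N))
      \<and> (\<forall>i\<in>{0..<length d}.
            (let prev = (if i = 0 then 0 else n i (d ! (i-1))) in
              (i+1 \<notin> A \<longrightarrow> prev < n (i+1) 1) \<and> (i+1 \<in> A \<longrightarrow> prev = n (i+1) 1)))}"

definition P_N :: "nat \<Rightarrow> nat list \<Rightarrow> (nat \<Rightarrow> nat \<Rightarrow> nat) \<Rightarrow> nat set \<Rightarrow> real" where
  "P_N N d n A = (\<Prod>i\<in>{1..length d} - A. \<Prod>j\<in>{1..d ! (i-1)}.
      (if odd i then 1 / (real N - real (n i j)) else 1 / real (n i j)))"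

definition hN :: "nat \<Rightarrow> nat list \<Rightarrow> real" where
  "hN N d = (\<Sum>A\<in>Pow {i\<in>{1..length d}. d ! (i-1) = 1}.
      1 / real N ^ card A * (\<Sum>n\<in>H_set N d A. P_N N d n A))"

definition minus_delta :: "nat list \<Rightarrow> nat set \<Rightarrow> nat list" where
  "minus_delta c A = map (\<lambda>i. c ! i - (if i+1 \<in> A then 1 else 0)) [0..<length c]"

definition delete_pos :: "nat list \<Rightarrow> nat set \<Rightarrow> nat list" where
  "delete_pos c A = map (\<lambda>i. c ! i) (filter (\<lambda>i. i+1 \<notin> A) [0..<length c])"

definition odd_even :: "nat set \<Rightarrow> bool" where
  "odd_even A \<longleftrightarrow> (\<forall>i\<in>A. (odd i \<longrightarrow> i+1 \<in> A) \<and> (even i \<longrightarrow> i-1 \<in> A))"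

end

theory Submission
  imports Defs
begin

definition Ch :: "(nat \<Rightarrow> 'a set) \<Rightarrow> (nat \<Rightarrow> 'a \<Rightarrow> 'a \<Rightarrow> bool) \<Rightarrow> 'a \<Rightarrow> nat \<Rightarrow> 'a \<Rightarrow> (nat \<Rightarrow> 'a) set" where
  "Ch V R z r x = {f. (\<forall>i. (i \<in> {1..r} \<longrightarrow> f i \<in> V i) \<and> (i \<notin> {1..r} \<longrightarrow> f i = z))
      \<and> (\<forall>i\<in>{1..<r}. R i (f i) (f (i+1))) \<and> (0 < r \<longrightarrow> R 0 x (f 1))}"

definition fcons :: "'a \<Rightarrow> 'a \<Rightarrow> (nat \<Rightarrow> 'a) \<Rightarrow> nat \<Rightarrow> 'a" where
  "fcons z a f = (\<lambda>i. if i = 0 then z else if i = 1 then a else f (i - 1))"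

lemma Ch_0: "Ch V R z 0 x = {\<lambda>_. z}"
  unfolding Ch_def by auto

lemma finite_Ch:
  assumes "\<forall>i\<in>{1..r}. finite (V i)"
  shows "finite (Ch V R z r x)"
proof -
  have "Ch V R z r x \<subseteq> {f. \<forall>i. (i \<in> {1..r} \<longrightarrow> f i \<in> (\<Union>j\<in>{1..r}. V j)) \<and> (i \<notin> {1..r} \<longrightarrow> f i = z)}"
    unfolding Ch_def by auto
  moreover have "finite {f. \<forall>i. (i \<in> {1..r} \<longrightarrow> f i \<in> (\<Union>j\<in>{1..r}. V j)) \<and> (i \<notin> {1..r} \<longrightarrow> f i = z)}"
    by (rule finite_set_of_finite_funs) (use assms in auto)
  ultimately show ?thesis by (rule finite_subset)
qed

lemma Ch_Suc:
  "Ch V R z (Suc r) x = (\<lambda>(a,f). fcons z a f) ` (SIGMA a:{a\<in>V 1. R 0 x a}. Ch (\<lambda>i. V (Suc i)) (\<lambda>i. R (Suc i)) z r a)"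
proof (intro equalityI subsetI)
  fix f assume f: "f \<in> Ch V R z (Suc r) x"
  define g where "g = (\<lambda>i. if i = 0 then z else f (Suc i))"
  have "f = fcons z (f 1) g"
    using f unfolding fcons_def g_def Ch_def by (auto simp: fun_eq_iff)
  moreover have "(f 1, g) \<in> (SIGMA a:{a\<in>V 1. R 0 x a}. Ch (\<lambda>i. V (Suc i)) (\<lambda>i. R (Suc i)) z r a)"
  proof -
    have "f 1 \<in> V 1" "R 0 x (f 1)" using f unfolding Ch_def by auto
    moreover have "g \<in> Ch (\<lambda>i. V (Suc i)) (\<lambda>i. R (Suc i)) z r (f 1)"
      unfolding Ch_def
    proof (intro CollectI conjI allI impI ballI)
      fix i show "i \<in> {1..r} \<Longrightarrow> g i \<in> V (Suc i)" using f unfolding Ch_def g_def by auto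
      show "i \<notin> {1..r} \<Longrightarrow> g i = z" using f unfolding Ch_def g_def by auto
    next
      fix i assume "i \<in> {1..<r}" then show "R (Suc i) (g i) (g (i+1))"
        using f unfolding Ch_def g_def by auto
    next
      assume "0 < r" then show "R (Suc 0) (f 1) (g 1)" using f unfolding Ch_def g_def by auto
    qed
    ultimately show ?thesis by auto
  qed
  ultimately show "f \<in> (\<lambda>(a,f). fcons z a f) ` (SIGMA a:{a\<in>V 1. R 0 x a}. Ch (\<lambda>i. V (Suc i)) (\<lambda>i. R (Suc i)) z r a)"
    by (auto intro!: image_eqI)
next
  fix f assume "f \<in> (\<lambda>(a,f). fcons z a f) ` (SIGMA a:{a\<in>V 1. R 0 x a}. Ch (\<lambda>i. V (Suc i)) (\<lambda>i. R (Suc i)) z r a)"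
  then obtain a g where f: "f = fcons z a g" and a: "a \<in> V 1" "R 0 x a"
    and g: "g \<in> Ch (\<lambda>i. V (Suc i)) (\<lambda>i. R (Suc i)) z r a" by auto
  show "f \<in> Ch V R z (Suc r) x" unfolding Ch_def
  proof (intro CollectI conjI allI impI ballI)
    fix i assume i: "i \<in> {1..Suc r}"
    show "f i \<in> V i"
    proof (cases "i = 1")
      case True then show ?thesis using a unfolding f fcons_def by auto
    next
      case False
      then have "i - 1 \<in> {1..r}" "Suc (i - 1) = i" using i by auto
      then show ?thesis using g False i unfolding f fcons_def Ch_def by (metis (no_types, lifting) mem_Collect_eq not_one_le_zero atLeastAtMost_iff)
    qed
  next
    fix i
    show "i \<notin> {1..Suc r} \<Longrightarrow> f i = z" using g unfolding f fcons_def Ch_def by auto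
  next
    fix i assume i: "i \<in> {1..<Suc r}"
    show "R i (f i) (f (i+1))"
    proof (cases "i = 1")
      case True
      then show ?thesis using g i unfolding f fcons_def Ch_def by auto
    next
      case False
      then have "i - 1 \<in> {1..<r}" "Suc (i - 1) = i" using i by auto
      then show ?thesis using g unfolding f fcons_def Ch_def
        by (auto, metis One_nat_def Suc_eq_plus1)
    qed
  next
    show "R 0 x (f 1)" using a unfolding f fcons_def by auto
  qed
qed

lemma inj_fcons: "inj_on (\<lambda>(a,f). fcons z a f) (SIGMA a:A. Ch V R z r a)"
proof (rule inj_onI, clarsimp)
  fix a f b g assume f: "f \<in> Ch V R z r a" and g: "g \<in> Ch V R z r b" and eq: "fcons z a f = fcons z b g"
  have "a = b" using fun_cong[OF eq, of 1] unfolding fcons_def by auto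
  moreover have "f = g"
  proof
    fix i show "f i = g i"
    proof (cases "i = 0")
      case True then show ?thesis using f g unfolding Ch_def by auto
    next
      case False then show ?thesis using fun_cong[OF eq, of "Suc i"] unfolding fcons_def by auto
    qed
  qed
  ultimately show "a = b \<and> f = g" by auto
qed

lemma sum_Ch_Suc:
  assumes "\<forall>i\<in>{1..Suc r}. finite (V i)"
  shows "(\<Sum>f\<in>Ch V R z (Suc r) x. F f) =
     (\<Sum>a\<in>{a\<in>V 1. R 0 x a}. \<Sum>f\<in>Ch (\<lambda>i. V (Suc i)) (\<lambda>i. R (Suc i)) z r a. F (fcons z a f))"
proof -
  have "(\<Sum>f\<in>Ch V R z (Suc r) x. F f) =
        (\<Sum>(a,f)\<in>(SIGMA a:{a\<in>V 1. R 0 x a}. Ch (\<lambda>i. V (Suc i)) (\<lambda>i. R (Suc i)) z r a). F (fcons z a f))"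
    unfolding Ch_Suc by (subst sum.reindex[OF inj_fcons]) (auto intro!: sum.cong)
  also have "\<dots> = (\<Sum>a\<in>{a\<in>V 1. R 0 x a}. \<Sum>f\<in>Ch (\<lambda>i. V (Suc i)) (\<lambda>i. R (Suc i)) z r a. F (fcons z a f))"
    by (rule sum.Sigma[symmetric]) (use assms in \<open>auto intro!: finite_Ch\<close>)
  finally show ?thesis .
qed

lemma Ch_cong:
  assumes "\<And>i u v. i \<ge> 1 \<Longrightarrow> R i u v = R' i u v" "\<And>v. R 0 x v = R' 0 x' v"
  shows "Ch V R z r x = Ch V R' z r x'"
  unfolding Ch_def using assms by (auto simp: Ball_def)

lemma Ch_cong2:
  assumes "\<And>i. i \<in> {1..r} \<Longrightarrow> V i = V' i" "\<And>i u v. i \<ge> 1 \<Longrightarrow> R i u v = R' i u v" "\<And>v. R 0 x v = R' 0 x' v"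
  shows "Ch V R z r x = Ch V' R' z r x'"
  unfolding Ch_def using assms by (auto simp: Ball_def)

lemma prod_fcons:
  "(\<Prod>i\<in>{1..Suc r}. w i (fcons z a f i)) = w 1 a * (\<Prod>i\<in>{1..r}. w (Suc i) (f i))"
proof -
  have "{1..Suc r} = insert 1 (Suc ` {1..r})" by (auto simp: image_iff)
  then have "(\<Prod>i\<in>{1..Suc r}. w i (fcons z a f i)) = w 1 a * (\<Prod>i\<in>Suc ` {1..r}. w i (fcons z a f i))"
    by (simp add: fcons_def image_iff)
  also have "(\<Prod>i\<in>Suc ` {1..r}. w i (fcons z a f i)) = (\<Prod>i\<in>{1..r}. w (Suc i) (f i))"
    by (subst prod.reindex) (auto simp: fcons_def intro!: prod.cong)
  finally show ?thesis .
qed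

lemma fcons_last: "fcons z a f (Suc r) = (if r = 0 then a else f r)"
  by (simp add: fcons_def)

lemma inj_Suc_img: "inj_on ((`) Suc) X"
  by (rule inj_onI) (auto simp: inj_image_eq_iff)

lemma inj_ins_Suc_img: "inj_on (\<lambda>B. insert 1 (Suc ` B)) {B. B \<subseteq> {1..n}}"
proof (rule inj_onI)
  fix B C assume B: "B \<in> {B. B \<subseteq> {1..n}}" and C: "C \<in> {B. B \<subseteq> {1..n}}"
    and eq: "insert 1 (Suc ` B) = insert 1 (Suc ` C)"
  have "Suc ` B = Suc ` C"
  proof -
    have "1 \<notin> Suc ` B" "1 \<notin> Suc ` C" using B C by auto
    then show ?thesis using eq by (metis insert_ident)
  qed
  then show "B = C" by (simp add: inj_image_eq_iff)
qed

lemma pow_peel: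
  "(\<Sum>A\<in>{A. A \<subseteq> {i\<in>{1..Suc n}. P i} \<and> Q A}. F A) =
   (\<Sum>B\<in>{B. B \<subseteq> {i\<in>{1..n}. P (Suc i)} \<and> Q (Suc ` B)}. F (Suc ` B)) +
   (if P 1 then (\<Sum>B\<in>{B. B \<subseteq> {i\<in>{1..n}. P (Suc i)} \<and> Q (insert 1 (Suc ` B))}. F (insert 1 (Suc ` B))) else 0)"
proof -
  let ?S = "{A. A \<subseteq> {i\<in>{1..Suc n}. P i} \<and> Q A}"
  let ?B0 = "{B. B \<subseteq> {i\<in>{1..n}. P (Suc i)} \<and> Q (Suc ` B)}"
  let ?B1 = "{B. B \<subseteq> {i\<in>{1..n}. P (Suc i)} \<and> Q (insert 1 (Suc ` B))}"
  have fin: "finite ?S" by (rule finite_subset[of _ "Pow {1..Suc n}"]) auto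
  have split: "?S = {A\<in>?S. 1 \<notin> A} \<union> {A\<in>?S. 1 \<in> A}" by auto
  have e0: "{A\<in>?S. 1 \<notin> A} = (`) Suc ` ?B0"
  proof (intro equalityI subsetI)
    fix A assume A: "A \<in> {A\<in>?S. 1 \<notin> A}"
    define B where "B = {i. Suc i \<in> A}"
    have "Suc ` B = A"
    proof (intro equalityI subsetI)
      fix x assume "x \<in> Suc ` B" then show "x \<in> A" unfolding B_def by auto
    next
      fix x assume x: "x \<in> A"
      then have "x \<noteq> 0" "x \<noteq> 1" using A by auto
      then have "x = Suc (x - 1)" by simp
      moreover have "x - 1 \<in> B" unfolding B_def using x \<open>x = Suc (x - 1)\<close> by simp
      ultimately show "x \<in> Suc ` B" by blast
    qed
    moreover have "B \<subseteq> {i\<in>{1..n}. P (Suc i)}"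
    proof
      fix i assume "i \<in> B" then have "Suc i \<in> A" unfolding B_def by auto
      moreover have "1 \<notin> A" using A by simp
      ultimately have "Suc i \<noteq> 1" by metis
      then show "i \<in> {i\<in>{1..n}. P (Suc i)}" using A \<open>Suc i \<in> A\<close> by (cases i) auto
    qed
    then have "B \<in> ?B0" using A \<open>Suc ` B = A\<close> by simp
    ultimately show "A \<in> (`) Suc ` ?B0" by blast
  qed auto
  have e1: "{A\<in>?S. 1 \<in> A} = (\<lambda>B. insert 1 (Suc ` B)) ` ?B1" if P1: "P 1"
  proof (intro equalityI subsetI)
    fix A assume A: "A \<in> {A\<in>?S. 1 \<in> A}"
    define B where "B = {i. i \<noteq> 0 \<and> Suc i \<in> A}"
    have "insert 1 (Suc ` B) = A"
    proof (intro equalityI subsetI)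
      fix x assume "x \<in> insert 1 (Suc ` B)" then show "x \<in> A" using A unfolding B_def by auto
    next
      fix x assume x: "x \<in> A"
      show "x \<in> insert 1 (Suc ` B)"
      proof (cases "x = 1")
        case False
        then have "x \<noteq> 0" using A x by auto
        then have "x = Suc (x - 1)" by simp
        moreover have "x - 1 \<in> B" unfolding B_def using x \<open>x = Suc (x - 1)\<close> False by auto
        ultimately show ?thesis by blast
      qed simp
    qed
    moreover have "B \<subseteq> {i\<in>{1..n}. P (Suc i)}"
    proof
      fix i assume "i \<in> B" then have "Suc i \<in> A" "i \<noteq> 0" using A unfolding B_def by auto
      then show "i \<in> {i\<in>{1..n}. P (Suc i)}" using A by auto
    qed
    then have "B \<in> ?B1" using A \<open>insert 1 (Suc ` B) = A\<close> by simp
    ultimately show "A \<in> (\<lambda>B. insert 1 (Suc ` B)) ` ?B1" by blast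
  qed (use P1 in auto)
  have "(\<Sum>A\<in>?S. F A) = (\<Sum>A\<in>{A\<in>?S. 1 \<notin> A}. F A) + (\<Sum>A\<in>{A\<in>?S. 1 \<in> A}. F A)"
    by (subst split, rule sum.union_disjoint) (use fin in auto)
  also have "(\<Sum>A\<in>{A\<in>?S. 1 \<notin> A}. F A) = (\<Sum>B\<in>?B0. F (Suc ` B))"
    unfolding e0 by (rule sum.reindex[OF inj_Suc_img, unfolded comp_def])
  also have "(\<Sum>A\<in>{A\<in>?S. 1 \<in> A}. F A) = (if P 1 then (\<Sum>B\<in>?B1. F (insert 1 (Suc ` B))) else 0)"
  proof (cases "P 1")
    case True
    have "inj_on (\<lambda>B. insert 1 (Suc ` B)) ?B1"
      by (rule inj_on_subset[OF inj_ins_Suc_img[of n]]) auto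
    then show ?thesis unfolding e1[OF True] using True by (simp add: sum.reindex)
  next
    case False
    then have "{A\<in>?S. 1 \<in> A} = {}" by auto
    then show ?thesis using False by (simp only: sum.empty if_False)
  qed
  finally show ?thesis .
qed

lemma card_Suc_img: "card (Suc ` B) = card B"
  by (simp add: card_image)

lemma card_ins_Suc_img: "finite B \<Longrightarrow> 0 \<notin> B \<Longrightarrow> card (insert 1 (Suc ` B)) = Suc (card B)"
  by (subst card_insert_disjoint) (auto simp: card_image)

definition zrel :: "nat set \<Rightarrow> nat \<Rightarrow> nat \<Rightarrow> nat \<Rightarrow> bool" where
  "zrel A i a b = (if i = 0 then a \<le> b else if i \<in> A then a \<le> b else a < b)"

definition zw :: "nat \<Rightarrow> nat list \<Rightarrow> nat set \<Rightarrow> nat \<Rightarrow> nat \<Rightarrow> real" where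
  "zw N k A i v = (if i \<in> A then 1 / (real N - real v) else 1 / real v ^ (k!(i-1)))"

definition zH :: "nat \<Rightarrow> nat list \<Rightarrow> nat set \<Rightarrow> nat \<Rightarrow> real" where
  "zH N k A s = (\<Sum>n\<in>Ch (\<lambda>_. {1..<N}) (zrel A) 0 (length k) s. \<Prod>i\<in>{1..length k}. zw N k A i (n i))"

definition zg :: "nat \<Rightarrow> nat list \<Rightarrow> nat \<Rightarrow> real" where
  "zg N k s = (\<Sum>A\<in>{A. A \<subseteq> {i\<in>{1..length k}. k!(i-1) = 1}}. zH N k A s)"

lemma prod_if_split:
  assumes "finite I" "A \<subseteq> I"
  shows "(\<Prod>i\<in>I. if i \<in> A then f i else g i) = (\<Prod>i\<in>A. f i) * (\<Prod>i\<in>I - A. g i)"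
proof -
  have "(\<Prod>i\<in>I. if i \<in> A then f i else g i) = prod f (I \<inter> {x. x \<in> A}) * prod g (I \<inter> - {x. x \<in> A})"
    by (rule prod.If_cases) (rule assms)
  moreover have "I \<inter> {x. x \<in> A} = A" "I \<inter> - {x. x \<in> A} = I - A" using assms by auto
  ultimately show ?thesis by simp
qed

lemma zeta_diamond_zg: "zeta_diamond N k = zg N k 1"
proof -
  have "zeta_diamond N k = (\<Sum>A\<in>{A. A \<subseteq> {i\<in>{1..length k}. k!(i-1) = 1}}. zH N k A 1)"
    unfolding zeta_diamond_def Pow_def
  proof (rule sum.cong[OF refl])
    fix A assume A: "A \<in> {A. A \<subseteq> {i\<in>{1..length k}. k!(i-1) = 1}}"
    have S: "S_set N (length k) A = Ch (\<lambda>_. {1..<N}) (zrel A) 0 (length k) 1"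
    proof -
      have e1: "\<And>x. (1 \<le> x \<and> x \<le> N - 1) = (x \<in> {1..<N})" by auto
      have e2: "\<And>i a b. i \<in> {1..<length k} \<Longrightarrow> zrel A i a b = ((i \<in> A \<longrightarrow> a \<le> b) \<and> (i \<notin> A \<longrightarrow> a < b))"
        unfolding zrel_def by auto
      have e3: "\<And>f. (\<forall>i. (i \<in> {1..length k} \<longrightarrow> f i \<in> {1..<N}) \<and> (i \<notin> {1..length k} \<longrightarrow> f i = 0)) \<Longrightarrow> (0 < length k \<longrightarrow> zrel A 0 1 (f 1))"
        unfolding zrel_def by (metis atLeastAtMost_iff atLeastLessThan_iff le_refl less_one linorder_not_less)
      show ?thesis unfolding S_set_def Ch_def
        using e1 e2 e3 by (smt (verit, ccfv_SIG) Collect_cong)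
    qed
    show "(\<Sum>n\<in>S_set N (length k) A. (\<Prod>i\<in>A. 1 / (real N - real (n i))) * (\<Prod>i\<in>{1..length k} - A. 1 / real (n i) ^ k ! (i - 1))) = zH N k A 1"
      unfolding zH_def S zw_def
      by (rule sum.cong[OF refl], rule prod_if_split[symmetric]) (use A in auto)
  qed
  then show ?thesis unfolding zg_def .
qed

lemma range_max: "{a\<in>{1..<N}. s \<le> (a::nat)} = {max 1 s..<N}" by auto

lemma zH_peel0:
  assumes "B \<subseteq> {1..length ks}"
  shows "zH N (k#ks) (Suc ` B) s = (\<Sum>a\<in>{max 1 s..<N}. zH N ks B (Suc a) / real a ^ k)"
proof -
  let ?V = "\<lambda>_::nat. {1..<N}"
  have "zH N (k#ks) (Suc ` B) s = (\<Sum>a\<in>{a\<in>{1..<N}. zrel (Suc ` B) 0 s a}.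
      \<Sum>f\<in>Ch ?V (\<lambda>i. zrel (Suc ` B) (Suc i)) 0 (length ks) a.
        \<Prod>i\<in>{1..Suc (length ks)}. zw N (k#ks) (Suc ` B) i (fcons 0 a f i))"
    unfolding zH_def by (simp add: sum_Ch_Suc)
  also have "\<dots> = (\<Sum>a\<in>{max 1 s..<N}. \<Sum>f\<in>Ch ?V (zrel B) 0 (length ks) (Suc a).
        1 / real a ^ k * (\<Prod>i\<in>{1..length ks}. zw N ks B i (f i)))"
  proof (rule sum.cong)
    show "{a\<in>{1..<N}. zrel (Suc ` B) 0 s a} = {max 1 s..<N}" unfolding zrel_def by auto
  next
    fix a
    have C: "Ch ?V (\<lambda>i. zrel (Suc ` B) (Suc i)) 0 (length ks) a = Ch ?V (zrel B) 0 (length ks) (Suc a)"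
      by (rule Ch_cong) (use assms in \<open>auto simp: zrel_def inj_image_mem_iff\<close>)
    show "(\<Sum>f\<in>Ch ?V (\<lambda>i. zrel (Suc ` B) (Suc i)) 0 (length ks) a.
        \<Prod>i\<in>{1..Suc (length ks)}. zw N (k#ks) (Suc ` B) i (fcons 0 a f i)) =
      (\<Sum>f\<in>Ch ?V (zrel B) 0 (length ks) (Suc a). 1 / real a ^ k * (\<Prod>i\<in>{1..length ks}. zw N ks B i (f i)))"
      unfolding C prod_fcons
    proof (rule sum.cong[OF refl])
      fix f
      have "zw N (k#ks) (Suc ` B) 1 a = 1 / real a ^ k" using assms by (auto simp: zw_def)
      moreover have "(\<Prod>i\<in>{1..length ks}. zw N (k#ks) (Suc ` B) (Suc i) (f i)) = (\<Prod>i\<in>{1..length ks}. zw N ks B i (f i))"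
        by (rule prod.cong) (auto simp: zw_def inj_image_mem_iff)
      ultimately show "zw N (k#ks) (Suc ` B) 1 a * (\<Prod>i\<in>{1..length ks}. zw N (k#ks) (Suc ` B) (Suc i) (f i)) = 1 / real a ^ k * (\<Prod>i\<in>{1..length ks}. zw N ks B i (f i))"
        by simp
    qed
  qed
  also have "\<dots> = (\<Sum>a\<in>{max 1 s..<N}. zH N ks B (Suc a) / real a ^ k)"
    unfolding zH_def by (simp add: sum_divide_distrib)
  finally show ?thesis .
qed

lemma zH_peel1:
  assumes "B \<subseteq> {1..length ks}" "k = 1"
  shows "zH N (k#ks) (insert 1 (Suc ` B)) s = (\<Sum>a\<in>{max 1 s..<N}. zH N ks B a / (real N - real a))"
proof -
  let ?V = "\<lambda>_::nat. {1..<N}"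
  let ?A = "insert 1 (Suc ` B)"
  have "zH N (k#ks) ?A s = (\<Sum>a\<in>{a\<in>{1..<N}. zrel ?A 0 s a}.
      \<Sum>f\<in>Ch ?V (\<lambda>i. zrel ?A (Suc i)) 0 (length ks) a.
        \<Prod>i\<in>{1..Suc (length ks)}. zw N (k#ks) ?A i (fcons 0 a f i))"
    unfolding zH_def by (simp add: sum_Ch_Suc)
  also have "\<dots> = (\<Sum>a\<in>{max 1 s..<N}. \<Sum>f\<in>Ch ?V (zrel B) 0 (length ks) a.
        1 / (real N - real a) * (\<Prod>i\<in>{1..length ks}. zw N ks B i (f i)))"
  proof (rule sum.cong)
    show "{a\<in>{1..<N}. zrel ?A 0 s a} = {max 1 s..<N}" unfolding zrel_def by auto
  next
    fix a
    have C: "Ch ?V (\<lambda>i. zrel ?A (Suc i)) 0 (length ks) a = Ch ?V (zrel B) 0 (length ks) a"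
      by (rule Ch_cong) (use assms in \<open>auto simp: zrel_def inj_image_mem_iff\<close>)
    show "(\<Sum>f\<in>Ch ?V (\<lambda>i. zrel ?A (Suc i)) 0 (length ks) a.
        \<Prod>i\<in>{1..Suc (length ks)}. zw N (k#ks) ?A i (fcons 0 a f i)) =
      (\<Sum>f\<in>Ch ?V (zrel B) 0 (length ks) a. 1 / (real N - real a) * (\<Prod>i\<in>{1..length ks}. zw N ks B i (f i)))"
      unfolding C prod_fcons
    proof (rule sum.cong[OF refl])
      fix f
      have "zw N (k#ks) ?A 1 a = 1 / (real N - real a)" using assms by (auto simp: zw_def)
      moreover have "(\<Prod>i\<in>{1..length ks}. zw N (k#ks) ?A (Suc i) (f i)) = (\<Prod>i\<in>{1..length ks}. zw N ks B i (f i))"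
        by (rule prod.cong) (auto simp: zw_def inj_image_mem_iff)
      ultimately show "zw N (k#ks) ?A 1 a * (\<Prod>i\<in>{1..length ks}. zw N (k#ks) ?A (Suc i) (f i)) = 1 / (real N - real a) * (\<Prod>i\<in>{1..length ks}. zw N ks B i (f i))"
        by simp
    qed
  qed
  also have "\<dots> = (\<Sum>a\<in>{max 1 s..<N}. zH N ks B a / (real N - real a))"
    unfolding zH_def by (simp add: sum_divide_distrib)
  finally show ?thesis .
qed

lemma zg_Cons:
  "zg N (k#ks) s = (\<Sum>m\<in>{max 1 s..<N}. zg N ks (Suc m) / real m ^ k
      + (if k = 1 then zg N ks m / (real N - real m) else 0))"
proof -
  let ?I = "{i\<in>{1..length ks}. ks!(i-1) = 1}"
  have I: "{i\<in>{1..length ks}. (k#ks)!(Suc i - 1) = 1} = ?I" by (auto simp: nth_Cons')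
  have "zg N (k#ks) s = (\<Sum>A\<in>{A. A \<subseteq> {i\<in>{1..Suc (length ks)}. (k#ks)!(i-1) = 1} \<and> True}. zH N (k#ks) A s)"
    by (simp add: zg_def)
  also have "\<dots> = (\<Sum>B\<in>{B. B \<subseteq> ?I}. zH N (k#ks) (Suc ` B) s)
      + (if k = 1 then (\<Sum>B\<in>{B. B \<subseteq> ?I}. zH N (k#ks) (insert 1 (Suc ` B)) s) else 0)"
    using pow_peel[where n="length ks" and P="\<lambda>i. (k#ks)!(i-1) = 1" and Q="\<lambda>_. True" and F="\<lambda>A. zH N (k#ks) A s"] unfolding I by simp
  also have "(\<Sum>B\<in>{B. B \<subseteq> ?I}. zH N (k#ks) (Suc ` B) s) = (\<Sum>B\<in>{B. B \<subseteq> ?I}. \<Sum>a\<in>{max 1 s..<N}. zH N ks B (Suc a) / real a ^ k)"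
    by (rule sum.cong[OF refl], rule zH_peel0) auto
  also have "\<dots> = (\<Sum>a\<in>{max 1 s..<N}. zg N ks (Suc a) / real a ^ k)"
    unfolding zg_def by (subst sum.swap) (simp add: sum_divide_distrib)
  also have "(if k = 1 then (\<Sum>B\<in>{B. B \<subseteq> ?I}. zH N (k#ks) (insert 1 (Suc ` B)) s) else 0)
     = (\<Sum>a\<in>{max 1 s..<N}. (if k = 1 then zg N ks a / (real N - real a) else 0))"
  proof (cases "k = 1")
    case True
    have "(\<Sum>B\<in>{B. B \<subseteq> ?I}. zH N (k#ks) (insert 1 (Suc ` B)) s) = (\<Sum>B\<in>{B. B \<subseteq> ?I}. \<Sum>a\<in>{max 1 s..<N}. zH N ks B a / (real N - real a))"
      by (rule sum.cong[OF refl], rule zH_peel1) (auto simp: True)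
    also have "\<dots> = (\<Sum>a\<in>{max 1 s..<N}. zg N ks a / (real N - real a))"
      unfolding zg_def by (subst sum.swap) (simp add: sum_divide_distrib)
    finally show ?thesis using True by simp
  qed simp
  finally show ?thesis by (simp add: sum.distrib)
qed

fun zc :: "nat \<Rightarrow> nat list \<Rightarrow> (nat \<Rightarrow> real) \<Rightarrow> nat \<Rightarrow> real" where
  "zc N [] \<phi> s = \<phi> s"
| "zc N (k#ks) \<phi> s = (\<Sum>m\<in>{max 1 s..<N}. zc N ks \<phi> (Suc m) / real m ^ k
      + (if k = 1 then zc N ks \<phi> m / (real N - real m) else 0))"

lemma zg_Nil: "zg N [] s = 1"
proof -
  have "{A. A \<subseteq> {i \<in> {1..length ([]::nat list)}. [] ! (i - 1) = (1::nat)}} = {{}}" by auto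
  then show ?thesis unfolding zg_def zH_def by (simp add: Ch_0)
qed

lemma zg_zc: "zg N k s = zc N k (\<lambda>_. 1) s"
proof (induction k arbitrary: s)
  case Nil then show ?case by (simp add: zg_Nil)
next
  case (Cons a k) then show ?case by (simp only: zg_Cons zc.simps)
qed

lemma zc_append: "zc N (xs @ ys) \<phi> = zc N xs (zc N ys \<phi>)"
proof (induction xs)
  case Nil then show ?case by simp
next
  case (Cons a xs) then show ?case by (simp only: append_Cons zc.simps)
qed

lemma zeta_diamond_zc: "zeta_diamond N k = zc N k (\<lambda>_. 1) 1"
  by (simp add: zeta_diamond_zg zg_zc)

definition hV :: "nat \<Rightarrow> nat list \<Rightarrow> nat \<Rightarrow> (nat \<Rightarrow> nat) set" where
  "hV N d i = {\<rho>. (\<forall>j. j \<notin> {1..d!(i-1)} \<longrightarrow> \<rho> j = 0) \<and> (\<forall>j\<in>{1..<d!(i-1)}. \<rho> j \<le> \<rho> (j+1)) \<and> (\<forall>j\<in>{1..d!(i-1)}. \<rho> j < N)}"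

definition hrel :: "nat list \<Rightarrow> nat set \<Rightarrow> nat \<Rightarrow> (nat \<Rightarrow> nat) \<Rightarrow> (nat \<Rightarrow> nat) \<Rightarrow> bool" where
  "hrel d A i \<rho> \<rho>' = (let prev = \<rho> (if i = 0 then 0 else d!(i-1)) in
      (Suc i \<notin> A \<longrightarrow> prev < \<rho>' 1) \<and> (Suc i \<in> A \<longrightarrow> prev = \<rho>' 1))"

definition wt :: "nat \<Rightarrow> bool \<Rightarrow> nat \<Rightarrow> real" where
  "wt N p v = (if p then 1 / (real N - real v) else 1 / real v)"

definition hw :: "nat \<Rightarrow> nat list \<Rightarrow> bool \<Rightarrow> nat set \<Rightarrow> nat \<Rightarrow> (nat \<Rightarrow> nat) \<Rightarrow> real" where
  "hw N d p A i \<rho> = (if i \<in> A then 1 else \<Prod>j\<in>{1..d!(i-1)}. wt N (odd i = p) (\<rho> j))"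

definition hH :: "nat \<Rightarrow> nat list \<Rightarrow> bool \<Rightarrow> nat set \<Rightarrow> nat \<Rightarrow> real" where
  "hH N d p A y = (\<Sum>n\<in>Ch (hV N d) (hrel d A) (\<lambda>_. 0) (length d) (\<lambda>_. y). \<Prod>i\<in>{1..length d}. hw N d p A i (n i))"

definition hg :: "nat \<Rightarrow> nat list \<Rightarrow> bool \<Rightarrow> nat \<Rightarrow> real" where
  "hg N d p y = (\<Sum>A\<in>{A. A \<subseteq> {i\<in>{1..length d}. d!(i-1) = 1}}. 1 / real N ^ card A * hH N d p A y)"

lemma finite_hV: "finite (hV N d i)"
proof -
  have "hV N d i \<subseteq> {\<rho>. \<forall>j. (j \<in> {1..d!(i-1)} \<longrightarrow> \<rho> j \<in> {..<N}) \<and> (j \<notin> {1..d!(i-1)} \<longrightarrow> \<rho> j = 0)}"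
    unfolding hV_def by auto
  moreover have "finite {\<rho>. \<forall>j. (j \<in> {1..d!(i-1)} \<longrightarrow> \<rho> j \<in> {..<N}) \<and> (j \<notin> {1..d!(i-1)} \<longrightarrow> \<rho> j = 0)}"
    by (rule finite_set_of_finite_funs) auto
  ultimately show ?thesis by (rule finite_subset)
qed

lemma hN_hg: "hN N d = hg N d True 0"
  unfolding hN_def hg_def Pow_def
proof (rule sum.cong[OF refl])
  fix A assume A: "A \<in> {A. A \<subseteq> {i\<in>{1..length d}. d!(i-1) = 1}}"
  have S: "H_set N d A = Ch (hV N d) (hrel d A) (\<lambda>_. 0) (length d) (\<lambda>_. 0)"
  proof (intro equalityI subsetI)
    fix n assume n: "n \<in> H_set N d A"
    show "n \<in> Ch (hV N d) (hrel d A) (\<lambda>_. 0) (length d) (\<lambda>_. 0)"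
      unfolding Ch_def
    proof (intro CollectI conjI allI impI ballI)
      fix i assume "i \<in> {1..length d}" then show "n i \<in> hV N d i"
        using n unfolding H_set_def hV_def by auto
    next
      fix i assume "i \<notin> {1..length d}" then show "n i = (\<lambda>_. 0)"
        using n unfolding H_set_def by auto
    next
      fix i assume i: "i \<in> {1..<length d}"
      then have i0: "i \<in> {0..<length d}" by auto
      have "\<forall>i\<in>{0..<length d}. let prev = if i = 0 then 0 else n i (d ! (i - 1))
          in (i + 1 \<notin> A \<longrightarrow> prev < n (i + 1) 1) \<and> (i + 1 \<in> A \<longrightarrow> prev = n (i + 1) 1)"
        using n unfolding H_set_def by blast
      then have "let prev = if i = 0 then 0 else n i (d ! (i - 1))
          in (i + 1 \<notin> A \<longrightarrow> prev < n (i + 1) 1) \<and> (i + 1 \<in> A \<longrightarrow> prev = n (i + 1) 1)"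
        using i0 by blast
      then show "hrel d A i (n i) (n (i+1))" using i unfolding hrel_def Let_def by auto
    next
      assume "0 < length d"
      then have "0 \<in> {0..<length d}" by auto
      then show "hrel d A 0 (\<lambda>_. 0) (n 1)" using n unfolding H_set_def hrel_def Let_def by fastforce
    qed
  next
    fix n assume n: "n \<in> Ch (hV N d) (hrel d A) (\<lambda>_. 0) (length d) (\<lambda>_. 0)"
    show "n \<in> H_set N d A" unfolding H_set_def
    proof (intro CollectI conjI allI impI ballI)
      fix i j assume "\<not> (i \<in> {1..length d} \<and> j \<in> {1..d ! (i - 1)})"
      then show "n i j = 0" using n unfolding Ch_def hV_def by (cases "i \<in> {1..length d}") auto
    next
      fix i j assume "i \<in> {1..length d}" "j \<in> {1..<d ! (i - 1)}"
      then show "n i j \<le> n i (j + 1)" using n unfolding Ch_def hV_def by auto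
    next
      fix i j assume "i \<in> {1..length d}" "j \<in> {1..d ! (i - 1)}"
      then show "n i j < N" using n unfolding Ch_def hV_def by auto
    next
      fix i assume i: "i \<in> {0..<length d}"
      show "let prev = if i = 0 then 0 else n i (d ! (i - 1))
          in (i + 1 \<notin> A \<longrightarrow> prev < n (i + 1) 1) \<and> (i + 1 \<in> A \<longrightarrow> prev = n (i + 1) 1)"
      proof (cases "i = 0")
        case True
        then have "hrel d A 0 (\<lambda>_. 0) (n 1)" using n i unfolding Ch_def by auto
        then show ?thesis using True unfolding hrel_def Let_def by auto
      next
        case False
        then have "hrel d A i (n i) (n (i+1))" using n i unfolding Ch_def by auto
        then show ?thesis using False unfolding hrel_def Let_def by auto
      qed
    qed
  qed
  have P: "\<And>n. P_N N d n A = (\<Prod>i\<in>{1..length d}. hw N d True A i (n i))"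
    unfolding P_N_def hw_def wt_def
    by (subst prod_if_split) (use A in \<open>auto intro!: prod.cong\<close>)
  show "1 / real N ^ card A * (\<Sum>n\<in>H_set N d A. P_N N d n A) = 1 / real N ^ card A * hH N d True A 0"
    unfolding S P hH_def ..
qed

lemma hH_peel0:
  assumes "B \<subseteq> {1..length ds}"
  shows "hH N (e#ds) p (Suc ` B) y = (\<Sum>\<rho>\<in>{\<rho>\<in>hV N (e#ds) 1. y < \<rho> 1}. (\<Prod>j\<in>{1..e}. wt N p (\<rho> j)) * hH N ds (\<not>p) B (\<rho> e))"
proof -
  have "hH N (e#ds) p (Suc ` B) y = (\<Sum>a\<in>{a\<in>hV N (e#ds) 1. hrel (e#ds) (Suc ` B) 0 (\<lambda>_. y) a}.
      \<Sum>f\<in>Ch (\<lambda>i. hV N (e#ds) (Suc i)) (\<lambda>i. hrel (e#ds) (Suc ` B) (Suc i)) (\<lambda>_. 0) (length ds) a.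
        \<Prod>i\<in>{1..Suc (length ds)}. hw N (e#ds) p (Suc ` B) i (fcons (\<lambda>_. 0) a f i))"
    unfolding hH_def by (simp add: sum_Ch_Suc finite_hV)
  also have "\<dots> = (\<Sum>a\<in>{\<rho>\<in>hV N (e#ds) 1. y < \<rho> 1}. \<Sum>f\<in>Ch (hV N ds) (hrel ds B) (\<lambda>_. 0) (length ds) (\<lambda>_. a e).
        (\<Prod>j\<in>{1..e}. wt N p (a j)) * (\<Prod>i\<in>{1..length ds}. hw N ds (\<not>p) B i (f i)))"
  proof (rule sum.cong)
    show "{a\<in>hV N (e#ds) 1. hrel (e#ds) (Suc ` B) 0 (\<lambda>_. y) a} = {\<rho>\<in>hV N (e#ds) 1. y < \<rho> 1}"
      using assms unfolding hrel_def Let_def by auto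
  next
    fix a
    have C: "Ch (\<lambda>i. hV N (e#ds) (Suc i)) (\<lambda>i. hrel (e#ds) (Suc ` B) (Suc i)) (\<lambda>_. 0) (length ds) a
        = Ch (hV N ds) (hrel ds B) (\<lambda>_. 0) (length ds) (\<lambda>_. a e)"
    proof (rule Ch_cong2)
      fix i :: nat assume "i \<in> {1..length ds}" then show "hV N (e#ds) (Suc i) = hV N ds i"
        unfolding hV_def by (cases i) auto
    next
      fix i :: nat and u v :: "nat \<Rightarrow> nat" assume "1 \<le> i" then show "hrel (e#ds) (Suc ` B) (Suc i) u v = hrel ds B i u v"
        unfolding hrel_def Let_def by (cases i) (auto simp: inj_image_mem_iff)
    next
      fix v :: "nat \<Rightarrow> nat" show "hrel (e#ds) (Suc ` B) (Suc 0) a v = hrel ds B 0 (\<lambda>_. a e) v"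
        unfolding hrel_def Let_def by (auto simp: inj_image_mem_iff)
    qed
    show "(\<Sum>f\<in>Ch (\<lambda>i. hV N (e#ds) (Suc i)) (\<lambda>i. hrel (e#ds) (Suc ` B) (Suc i)) (\<lambda>_. 0) (length ds) a.
        \<Prod>i\<in>{1..Suc (length ds)}. hw N (e#ds) p (Suc ` B) i (fcons (\<lambda>_. 0) a f i)) =
      (\<Sum>f\<in>Ch (hV N ds) (hrel ds B) (\<lambda>_. 0) (length ds) (\<lambda>_. a e).
        (\<Prod>j\<in>{1..e}. wt N p (a j)) * (\<Prod>i\<in>{1..length ds}. hw N ds (\<not>p) B i (f i)))"
      unfolding C prod_fcons
    proof (rule sum.cong[OF refl])
      fix f
      have "hw N (e#ds) p (Suc ` B) 1 a = (\<Prod>j\<in>{1..e}. wt N p (a j))" using assms by (auto simp: hw_def)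
      moreover have "(\<Prod>i\<in>{1..length ds}. hw N (e#ds) p (Suc ` B) (Suc i) (f i)) = (\<Prod>i\<in>{1..length ds}. hw N ds (\<not>p) B i (f i))"
        by (rule prod.cong[OF refl]) (auto simp: hw_def inj_image_mem_iff nth_Cons')
      ultimately show "hw N (e#ds) p (Suc ` B) 1 a * (\<Prod>i\<in>{1..length ds}. hw N (e#ds) p (Suc ` B) (Suc i) (f i)) =
          (\<Prod>j\<in>{1..e}. wt N p (a j)) * (\<Prod>i\<in>{1..length ds}. hw N ds (\<not>p) B i (f i))"
        by simp
    qed
  qed
  also have "\<dots> = (\<Sum>\<rho>\<in>{\<rho>\<in>hV N (e#ds) 1. y < \<rho> 1}. (\<Prod>j\<in>{1..e}. wt N p (\<rho> j)) * hH N ds (\<not>p) B (\<rho> e))"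
    unfolding hH_def by (simp add: sum_distrib_left)
  finally show ?thesis .
qed

lemma hH_peel1:
  assumes "B \<subseteq> {1..length ds}" "e = 1"
  shows "hH N (e#ds) p (insert 1 (Suc ` B)) y = (if y < N then hH N ds (\<not>p) B y else 0)"
proof -
  let ?A = "insert 1 (Suc ` B)"
  let ?r = "\<lambda>j::nat. if j = 1 then y else 0"
  have "hH N (e#ds) p ?A y = (\<Sum>a\<in>{a\<in>hV N (e#ds) 1. hrel (e#ds) ?A 0 (\<lambda>_. y) a}.
      \<Sum>f\<in>Ch (\<lambda>i. hV N (e#ds) (Suc i)) (\<lambda>i. hrel (e#ds) ?A (Suc i)) (\<lambda>_. 0) (length ds) a.
        \<Prod>i\<in>{1..Suc (length ds)}. hw N (e#ds) p ?A i (fcons (\<lambda>_. 0) a f i))"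
    unfolding hH_def by (simp add: sum_Ch_Suc finite_hV)
  also have "{a\<in>hV N (e#ds) 1. hrel (e#ds) ?A 0 (\<lambda>_. y) a} = (if y < N then {?r} else {})"
  proof -
    have "{a\<in>hV N (e#ds) 1. hrel (e#ds) ?A 0 (\<lambda>_. y) a} = {a. (\<forall>j. j \<noteq> 1 \<longrightarrow> a j = 0) \<and> a 1 < N \<and> a 1 = y}"
      using assms unfolding hV_def hrel_def Let_def by auto
    also have "\<dots> = (if y < N then {?r} else {})" by (auto simp: fun_eq_iff)
    finally show ?thesis .
  qed
  also have "(\<Sum>a\<in>(if y < N then {?r} else {}).
      \<Sum>f\<in>Ch (\<lambda>i. hV N (e#ds) (Suc i)) (\<lambda>i. hrel (e#ds) ?A (Suc i)) (\<lambda>_. 0) (length ds) a.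
        \<Prod>i\<in>{1..Suc (length ds)}. hw N (e#ds) p ?A i (fcons (\<lambda>_. 0) a f i))
     = (if y < N then hH N ds (\<not>p) B y else 0)"
  proof (cases "y < N")
    case True
    have C: "Ch (\<lambda>i. hV N (e#ds) (Suc i)) (\<lambda>i. hrel (e#ds) ?A (Suc i)) (\<lambda>_. 0) (length ds) ?r
        = Ch (hV N ds) (hrel ds B) (\<lambda>_. 0) (length ds) (\<lambda>_. y)"
    proof (rule Ch_cong2)
      fix i :: nat assume "i \<in> {1..length ds}" then show "hV N (e#ds) (Suc i) = hV N ds i"
        unfolding hV_def by (cases i) auto
    next
      fix i :: nat and u v :: "nat \<Rightarrow> nat" assume "1 \<le> i" then show "hrel (e#ds) ?A (Suc i) u v = hrel ds B i u v"
        unfolding hrel_def Let_def by (cases i) (auto simp: inj_image_mem_iff)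
    next
      fix v :: "nat \<Rightarrow> nat" show "hrel (e#ds) ?A (Suc 0) ?r v = hrel ds B 0 (\<lambda>_. y) v"
        using assms unfolding hrel_def Let_def by (auto simp: inj_image_mem_iff)
    qed
    have "(\<Sum>f\<in>Ch (\<lambda>i. hV N (e#ds) (Suc i)) (\<lambda>i. hrel (e#ds) ?A (Suc i)) (\<lambda>_. 0) (length ds) ?r.
        \<Prod>i\<in>{1..Suc (length ds)}. hw N (e#ds) p ?A i (fcons (\<lambda>_. 0) ?r f i)) = hH N ds (\<not>p) B y"
      unfolding C prod_fcons hH_def
    proof (rule sum.cong[OF refl])
      fix f
      have "hw N (e#ds) p ?A 1 ?r = 1" by (auto simp: hw_def)
      moreover have "(\<Prod>i\<in>{1..length ds}. hw N (e#ds) p ?A (Suc i) (f i)) = (\<Prod>i\<in>{1..length ds}. hw N ds (\<not>p) B i (f i))"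
        by (rule prod.cong[OF refl]) (auto simp: hw_def inj_image_mem_iff nth_Cons')
      ultimately show "hw N (e#ds) p ?A 1 ?r * (\<Prod>i\<in>{1..length ds}. hw N (e#ds) p ?A (Suc i) (f i)) =
          (\<Prod>i\<in>{1..length ds}. hw N ds (\<not>p) B i (f i))"
        by simp
    qed
    then show ?thesis using True by simp
  qed simp
  finally show ?thesis .
qed

lemma hg_Cons:
  "hg N (e#ds) p y = (\<Sum>\<rho>\<in>{\<rho>\<in>hV N (e#ds) 1. y < \<rho> 1}. (\<Prod>j\<in>{1..e}. wt N p (\<rho> j)) * hg N ds (\<not>p) (\<rho> e))
     + (if e = 1 \<and> y < N then hg N ds (\<not>p) y / real N else 0)"
proof -
  let ?I = "{i\<in>{1..length ds}. ds!(i-1) = 1}"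
  let ?R = "{\<rho>\<in>hV N (e#ds) 1. y < \<rho> 1}"
  have I: "{i\<in>{1..length ds}. (e#ds)!(Suc i - 1) = 1} = ?I" by (auto simp: nth_Cons')
  have finI: "\<And>B. B \<in> {B. B \<subseteq> ?I} \<Longrightarrow> finite B \<and> 0 \<notin> B" by (auto intro: finite_subset)
  have "hg N (e#ds) p y = (\<Sum>A\<in>{A. A \<subseteq> {i\<in>{1..Suc (length ds)}. (e#ds)!(i-1) = 1} \<and> True}. 1 / real N ^ card A * hH N (e#ds) p A y)"
    by (simp add: hg_def)
  also have "\<dots> = (\<Sum>B\<in>{B. B \<subseteq> ?I}. 1 / real N ^ card (Suc ` B) * hH N (e#ds) p (Suc ` B) y)
      + (if e = 1 then (\<Sum>B\<in>{B. B \<subseteq> ?I}. 1 / real N ^ card (insert 1 (Suc ` B)) * hH N (e#ds) p (insert 1 (Suc ` B)) y) else 0)"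
    using pow_peel[where n="length ds" and P="\<lambda>i. (e#ds)!(i-1) = 1" and Q="\<lambda>_. True" and F="\<lambda>A. 1 / real N ^ card A * hH N (e#ds) p A y"] unfolding I by simp
  also have "(\<Sum>B\<in>{B. B \<subseteq> ?I}. 1 / real N ^ card (Suc ` B) * hH N (e#ds) p (Suc ` B) y)
      = (\<Sum>B\<in>{B. B \<subseteq> ?I}. \<Sum>\<rho>\<in>?R. (\<Prod>j\<in>{1..e}. wt N p (\<rho> j)) * (1 / real N ^ card B * hH N ds (\<not>p) B (\<rho> e)))"
  proof (rule sum.cong[OF refl])
    fix B assume "B \<in> {B. B \<subseteq> ?I}"
    then have B: "B \<subseteq> {1..length ds}" by auto
    show "1 / real N ^ card (Suc ` B) * hH N (e#ds) p (Suc ` B) y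
      = (\<Sum>\<rho>\<in>?R. (\<Prod>j\<in>{1..e}. wt N p (\<rho> j)) * (1 / real N ^ card B * hH N ds (\<not>p) B (\<rho> e)))"
      unfolding hH_peel0[OF B] card_Suc_img sum_distrib_left by (simp add: ac_simps)
  qed
  also have "\<dots> = (\<Sum>\<rho>\<in>?R. (\<Prod>j\<in>{1..e}. wt N p (\<rho> j)) * hg N ds (\<not>p) (\<rho> e))"
    unfolding hg_def by (subst sum.swap) (simp add: sum_distrib_left)
  also have "(if e = 1 then (\<Sum>B\<in>{B. B \<subseteq> ?I}. 1 / real N ^ card (insert 1 (Suc ` B)) * hH N (e#ds) p (insert 1 (Suc ` B)) y) else 0)
      = (if e = 1 \<and> y < N then hg N ds (\<not>p) y / real N else 0)"
  proof (cases "e = 1 \<and> y < N")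
    case True
    have "(\<Sum>B\<in>{B. B \<subseteq> ?I}. 1 / real N ^ card (insert 1 (Suc ` B)) * hH N (e#ds) p (insert 1 (Suc ` B)) y)
        = (\<Sum>B\<in>{B. B \<subseteq> ?I}. (1 / real N ^ card B * hH N ds (\<not>p) B y) / real N)"
    proof (rule sum.cong[OF refl])
      fix B assume B: "B \<in> {B. B \<subseteq> ?I}"
      then show "1 / real N ^ card (insert 1 (Suc ` B)) * hH N (e#ds) p (insert 1 (Suc ` B)) y = (1 / real N ^ card B * hH N ds (\<not>p) B y) / real N"
      proof -
        have B': "B \<subseteq> {1..length ds}" using B by auto
        have h: "hH N (e#ds) p (insert 1 (Suc ` B)) y = hH N ds (\<not>p) B y"
          using hH_peel1[OF B', of e N p y] True by simp
        show ?thesis using finI[OF B] unfolding h by (subst card_ins_Suc_img) (auto simp: mult.commute)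
      qed
    qed
    then show ?thesis using True unfolding hg_def by (simp add: sum_divide_distrib)
  next
    case False
    have "(\<Sum>B\<in>{B. B \<subseteq> ?I}. 1 / real N ^ card (insert 1 (Suc ` B)) * hH N (e#ds) p (insert 1 (Suc ` B)) y) = 0"
      if "e = 1" "\<not> y < N"
    proof (rule sum.neutral, intro ballI)
      fix B assume "B \<in> {B. B \<subseteq> ?I}"
      then have B': "B \<subseteq> {1..length ds}" by auto
      have "hH N (e#ds) p (insert 1 (Suc ` B)) y = 0" using hH_peel1[OF B', of e N p y] that by simp
      then show "1 / real N ^ card (insert 1 (Suc ` B)) * hH N (e#ds) p (insert 1 (Suc ` B)) y = 0" by simp
    qed
    then show ?thesis using False by auto
  qed
  finally show ?thesis .
qed

definition Wp :: "nat \<Rightarrow> bool \<Rightarrow> (nat \<Rightarrow> real) \<Rightarrow> nat \<Rightarrow> real" where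
  "Wp N p g y = (\<Sum>m\<in>{max 1 y..<N}. wt N p m * g m)"

definition RowCh :: "nat \<Rightarrow> (nat \<Rightarrow> nat \<Rightarrow> bool) \<Rightarrow> nat \<Rightarrow> nat \<Rightarrow> (nat \<Rightarrow> nat) set" where
  "RowCh N rel e y = Ch (\<lambda>_. {..<N}) (\<lambda>j a b. if j = 0 then rel a b else a \<le> b) 0 e y"

lemma prod_fcons': "(\<Prod>i\<in>{1..Suc r}. g (fcons z a f i)) = g a * (\<Prod>i\<in>{1..r}. g (f i))"
  using prod_fcons[where w="\<lambda>_. g"] .

lemma RowCh_Suc_sum:
  "(\<Sum>\<rho>\<in>RowCh N rel (Suc j) y. F \<rho>) = (\<Sum>b\<in>{b\<in>{..<N}. rel y b}. \<Sum>\<rho>\<in>RowCh N (\<le>) j b. F (fcons 0 b \<rho>))"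
proof -
  have "(\<Sum>\<rho>\<in>RowCh N rel (Suc j) y. F \<rho>) = (\<Sum>b\<in>{b\<in>{..<N}. rel y b}.
      \<Sum>\<rho>\<in>Ch (\<lambda>_. {..<N}) (\<lambda>i. (\<lambda>j a b. if j = 0 then rel a b else a \<le> b) (Suc i)) 0 j b. F (fcons 0 b \<rho>))"
    unfolding RowCh_def by (subst sum_Ch_Suc) auto
  also have "\<dots> = (\<Sum>b\<in>{b\<in>{..<N}. rel y b}. \<Sum>\<rho>\<in>RowCh N (\<le>) j b. F (fcons 0 b \<rho>))"
    unfolding RowCh_def by (rule sum.cong[OF refl], subst Ch_cong[where R'="\<lambda>j a b. if j = 0 then a \<le> b else a \<le> b" and x'="_"]) auto
  finally show ?thesis .
qed

lemma row_sum_le: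
  assumes "a \<ge> 1"
  shows "(\<Sum>\<rho>\<in>RowCh N (\<le>) j a. (\<Prod>i\<in>{1..j}. wt N p (\<rho> i)) * G (if j = 0 then a else \<rho> j)) = (Wp N p ^^ j) G a"
  using assms
proof (induction j arbitrary: a)
  case 0
  then show ?case unfolding RowCh_def by (simp add: Ch_0)
next
  case (Suc j)
  have "(\<Sum>\<rho>\<in>RowCh N (\<le>) (Suc j) a. (\<Prod>i\<in>{1..Suc j}. wt N p (\<rho> i)) * G (if Suc j = 0 then a else \<rho> (Suc j)))
     = (\<Sum>b\<in>{b\<in>{..<N}. a \<le> b}. \<Sum>\<rho>\<in>RowCh N (\<le>) j b. wt N p b * ((\<Prod>i\<in>{1..j}. wt N p (\<rho> i)) * G (if j = 0 then b else \<rho> j)))"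
    unfolding RowCh_Suc_sum prod_fcons' fcons_last by (simp add: mult.assoc)
  also have "\<dots> = (\<Sum>b\<in>{b\<in>{..<N}. a \<le> b}. wt N p b * (Wp N p ^^ j) G b)"
  proof (rule sum.cong[OF refl])
    fix b assume "b \<in> {b\<in>{..<N}. a \<le> b}"
    then have "b \<ge> 1" using Suc.prems by auto
    show "(\<Sum>\<rho>\<in>RowCh N (\<le>) j b. wt N p b * ((\<Prod>i\<in>{1..j}. wt N p (\<rho> i)) * G (if j = 0 then b else \<rho> j))) = wt N p b * (Wp N p ^^ j) G b"
      by (simp only: sum_distrib_left[symmetric] Suc.IH[OF \<open>b \<ge> 1\<close>])
  qed
  also have "\<dots> = (Wp N p ^^ Suc j) G a"
  proof -
    have "{b\<in>{..<N}. a \<le> b} = {max 1 a..<N}" using Suc.prems by auto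
    then show ?thesis by (simp add: Wp_def)
  qed
  finally show ?case .
qed

lemma row_set: "e \<ge> 1 \<Longrightarrow> {\<rho>\<in>hV N (e#ds) 1. y < \<rho> 1} = RowCh N (<) e y"
  unfolding hV_def RowCh_def Ch_def by auto

lemma row_sum_first:
  assumes "e \<ge> 1"
  shows "(\<Sum>\<rho>\<in>{\<rho>\<in>hV N (e#ds) 1. y < \<rho> 1}. (\<Prod>j\<in>{1..e}. wt N p (\<rho> j)) * G (\<rho> e))
    = (\<Sum>n\<in>{Suc y..<N}. wt N p n * (Wp N p ^^ (e - 1)) G n)"
proof -
  obtain j where e: "e = Suc j" using assms by (cases e) auto
  have "(\<Sum>\<rho>\<in>{\<rho>\<in>hV N (e#ds) 1. y < \<rho> 1}. (\<Prod>j\<in>{1..e}. wt N p (\<rho> j)) * G (\<rho> e))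
     = (\<Sum>b\<in>{b\<in>{..<N}. y < b}. \<Sum>\<rho>\<in>RowCh N (\<le>) j b. wt N p b * ((\<Prod>i\<in>{1..j}. wt N p (\<rho> i)) * G (if j = 0 then b else \<rho> j)))"
  proof -
    have rs: "{\<rho>\<in>hV N (Suc j#ds) 1. y < \<rho> 1} = RowCh N (<) (Suc j) y" by (rule row_set) simp
    show ?thesis unfolding e rs RowCh_Suc_sum prod_fcons' fcons_last by (simp add: mult.assoc)
  qed
  also have "\<dots> = (\<Sum>b\<in>{b\<in>{..<N}. y < b}. wt N p b * (Wp N p ^^ j) G b)"
  proof (rule sum.cong[OF refl])
    fix b assume "b \<in> {b\<in>{..<N}. y < b}"
    then have "b \<ge> 1" by auto
    show "(\<Sum>\<rho>\<in>RowCh N (\<le>) j b. wt N p b * ((\<Prod>i\<in>{1..j}. wt N p (\<rho> i)) * G (if j = 0 then b else \<rho> j))) = wt N p b * (Wp N p ^^ j) G b"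
      by (simp only: sum_distrib_left[symmetric] row_sum_le[OF \<open>b \<ge> 1\<close>])
  qed
  also have "{b\<in>{..<N}. y < b} = {Suc y..<N}" by auto
  finally show ?thesis using e by simp
qed

fun hc :: "nat \<Rightarrow> nat list \<Rightarrow> bool \<Rightarrow> (nat \<Rightarrow> real) \<Rightarrow> nat \<Rightarrow> real" where
  "hc N [] p \<phi> y = \<phi> y"
| "hc N (e#ds) p \<phi> y = (\<Sum>n\<in>{Suc y..<N}. wt N p n * (Wp N p ^^ (e - 1)) (hc N ds (\<not>p) \<phi>) n)
     + (if e = 1 then hc N ds (\<not>p) \<phi> y / real N else 0)"

lemma Wp_pow_cong:
  assumes "\<And>t. t < N \<Longrightarrow> G t = G' t" "t < N"
  shows "(Wp N p ^^ j) G t = (Wp N p ^^ j) G' t"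
  using assms(2)
proof (induction j arbitrary: t)
  case 0 then show ?case using assms(1) by simp
next
  case (Suc j) then show ?case by (simp add: Wp_def)
qed

lemma hg_Nil: "hg N [] p y = 1"
proof -
  have "{A. A \<subseteq> {i \<in> {1..length ([]::nat list)}. [] ! (i - 1) = (1::nat)}} = {{}}" by auto
  then show ?thesis unfolding hg_def hH_def by (simp add: Ch_0)
qed

lemma hg_hc:
  assumes "\<forall>x\<in>set d. x \<ge> 1" "y < N"
  shows "hg N d p y = hc N d p (\<lambda>_. 1) y"
  using assms
proof (induction d arbitrary: p y)
  case Nil then show ?case by (simp add: hg_Nil)
next
  case (Cons e ds)
  have e: "e \<ge> 1" using Cons.prems by simp
  have IH: "\<And>t. t < N \<Longrightarrow> hg N ds (\<not>p) t = hc N ds (\<not>p) (\<lambda>_. 1) t" using Cons by simp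
  have "hg N (e#ds) p y = (\<Sum>n\<in>{Suc y..<N}. wt N p n * (Wp N p ^^ (e - 1)) (hg N ds (\<not>p)) n)
     + (if e = 1 then hg N ds (\<not>p) y / real N else 0)"
    unfolding hg_Cons row_sum_first[OF e] using Cons.prems by simp
  also have "\<dots> = hc N (e#ds) p (\<lambda>_. 1) y"
    using Cons.prems by (auto simp: IH intro!: sum.cong Wp_pow_cong)
  finally show ?case .
qed

lemma hN_hc: "\<forall>x\<in>set d. x \<ge> 1 \<Longrightarrow> N \<ge> 1 \<Longrightarrow> hN N d = hc N d True (\<lambda>_. 1) 0"
  by (simp add: hN_hg hg_hc)

lemma hc_append: "hc N (xs @ ys) p \<phi> = hc N xs p (hc N ys (if even (length xs) then p else \<not>p) \<phi>)"
proof (induction xs arbitrary: p)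
  case Nil then show ?case by (simp add: fun_eq_iff)
next
  case (Cons a xs)
  have "hc N ys (if even (length xs) then \<not>p else \<not>\<not>p) \<phi> = hc N ys (if even (length (a#xs)) then p else \<not>p) \<phi>"
    by simp
  then show ?case using Cons.IH[of "\<not>p"] by (simp only: append_Cons hc.simps)
qed

lemma minus_delta_Cons: "minus_delta (a#c) A = (a - (if 1 \<in> A then 1 else 0)) # minus_delta c {i. Suc i \<in> A}"
  unfolding minus_delta_def by (simp add: upt_conv_Cons map_Suc_upt[symmetric] del: upt_Suc)

lemma delete_pos_Cons: "delete_pos (a#c) A = (if 1 \<in> A then [] else [a]) @ delete_pos c {i. Suc i \<in> A}"
  unfolding delete_pos_def by (simp add: upt_conv_Cons map_Suc_upt[symmetric] filter_map comp_def del: upt_Suc)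

definition zidx :: "nat list \<Rightarrow> nat list" where
  "zidx d = concat (map (\<lambda>r. replicate (d ! (2*r) - 1) 1 @ [d ! (2*r+1) + 1]) [0..<length d div 2])"

lemma fN_zc: "fN N d = zc N (zidx d) (\<lambda>_. 1) 1"
  unfolding fN_def zidx_def zeta_diamond_zc ..

lemma zidx_Cons2: "zidx (a#b#c) = (replicate (a - 1) 1 @ [b + 1]) @ zidx c"
proof -
  have "length (a#b#c) div 2 = Suc (length c div 2)" by simp
  then show ?thesis unfolding zidx_def
    by (simp only: upt_conv_Cons[of 0] map_Suc_upt[symmetric] list.map concat.simps zero_less_Suc)
       (simp add: comp_def)
qed

lemma zc_sum: "zc N ks (\<lambda>t. \<Sum>A\<in>S. f A t) s = (\<Sum>A\<in>S. zc N ks (f A) s)"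
proof (induction ks arbitrary: s)
  case Nil then show ?case by simp
next
  case (Cons k ks)
  have "zc N (k#ks) (\<lambda>t. \<Sum>A\<in>S. f A t) s = (\<Sum>m\<in>{max 1 s..<N}. (\<Sum>A\<in>S. zc N ks (f A) (Suc m)) / real m ^ k
      + (if k = 1 then (\<Sum>A\<in>S. zc N ks (f A) m) / (real N - real m) else 0))"
    by (simp only: zc.simps Cons.IH)
  also have "\<dots> = (\<Sum>m\<in>{max 1 s..<N}. \<Sum>A\<in>S. zc N ks (f A) (Suc m) / real m ^ k
      + (if k = 1 then zc N ks (f A) m / (real N - real m) else 0))"
    by (cases "k = 1") (simp_all add: sum.distrib sum_divide_distrib)
  also have "\<dots> = (\<Sum>A\<in>S. zc N (k#ks) (f A) s)"
    by (subst sum.swap) simp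
  finally show ?case .
qed

lemma zc_scale: "zc N ks (\<lambda>t. c * f t) s = c * zc N ks f s"
proof (induction ks arbitrary: s)
  case Nil then show ?case by simp
next
  case (Cons k ks)
  show ?case by (simp only: zc.simps Cons.IH sum_distrib_left) (auto intro!: sum.cong simp: algebra_simps)
qed

lemma Wp_Suc: "(Wp N p ^^ Suc j) g y = (\<Sum>m\<in>{max 1 y..<N}. wt N p m * (Wp N p ^^ j) g m)"
  by (simp add: Wp_def)

lemma Wp_pow_sum: "(Wp N p ^^ j) (\<lambda>t. \<Sum>A\<in>S. f A t) y = (\<Sum>A\<in>S. (Wp N p ^^ j) (f A) y)"
proof (induction j arbitrary: y)
  case 0 then show ?case by simp
next
  case (Suc j)
  show ?case by (simp only: Wp_Suc Suc.IH sum_distrib_left) (rule sum.swap)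
qed

lemma Wp_pow_scale: "(Wp N p ^^ j) (\<lambda>t. c * f t) y = c * (Wp N p ^^ j) f y"
proof (induction j arbitrary: y)
  case 0 then show ?case by simp
next
  case (Suc j)
  show ?case by (simp only: Wp_Suc Suc.IH sum_distrib_left) (simp add: algebra_simps)
qed

lemma hc_sum: "hc N ds p (\<lambda>t. \<Sum>A\<in>S. f A t) y = (\<Sum>A\<in>S. hc N ds p (f A) y)"
proof (induction ds arbitrary: p y)
  case Nil then show ?case by simp
next
  case (Cons e ds)
  have "(\<lambda>t. hc N ds (\<not>p) (\<lambda>t. \<Sum>A\<in>S. f A t) t) = (\<lambda>t. \<Sum>A\<in>S. hc N ds (\<not>p) (f A) t)"
    using Cons.IH by auto
  then show ?case
    by (simp only: hc.simps Wp_pow_sum sum_distrib_left sum_divide_distrib)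
       (subst sum.swap, simp add: sum.distrib)
qed

lemma hc_scale: "hc N ds p (\<lambda>t. c * f t) y = c * hc N ds p f y"
proof (induction ds arbitrary: p y)
  case Nil then show ?case by simp
next
  case (Cons e ds)
  have "(\<lambda>t. hc N ds (\<not>p) (\<lambda>t. c * f t) t) = (\<lambda>t. c * hc N ds (\<not>p) f t)"
    using Cons.IH by auto
  then show ?case
    by (simp only: hc.simps Wp_pow_scale) (simp add: sum_distrib_left algebra_simps)
qed

abbreviation S2 :: "nat set \<Rightarrow> nat set" where "S2 C \<equiv> (\<lambda>x. Suc (Suc x)) ` C"

lemma pow_peel2:
  "(\<Sum>A\<in>{A. A \<subseteq> {i\<in>{1..Suc (Suc n)}. P i} \<and> Q A}. F A) =
     (\<Sum>C\<in>{C. C \<subseteq> {i\<in>{1..n}. P (Suc (Suc i))} \<and> Q (S2 C)}. F (S2 C))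
   + (if P (Suc 1) then (\<Sum>C\<in>{C. C \<subseteq> {i\<in>{1..n}. P (Suc (Suc i))} \<and> Q (insert (Suc 1) (S2 C))}. F (insert (Suc 1) (S2 C))) else 0)
   + (if P 1 then (\<Sum>C\<in>{C. C \<subseteq> {i\<in>{1..n}. P (Suc (Suc i))} \<and> Q (insert 1 (S2 C))}. F (insert 1 (S2 C))) else 0)
   + (if P 1 \<and> P (Suc 1) then (\<Sum>C\<in>{C. C \<subseteq> {i\<in>{1..n}. P (Suc (Suc i))} \<and> Q (insert 1 (insert (Suc 1) (S2 C)))}. F (insert 1 (insert (Suc 1) (S2 C)))) else 0)"
proof -
  have e1: "(\<Sum>B\<in>{B. B \<subseteq> {i\<in>{1..Suc n}. P (Suc i)} \<and> Q (Suc ` B)}. F (Suc ` B)) =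
     (\<Sum>C\<in>{C. C \<subseteq> {i\<in>{1..n}. P (Suc (Suc i))} \<and> Q (S2 C)}. F (S2 C))
   + (if P (Suc 1) then (\<Sum>C\<in>{C. C \<subseteq> {i\<in>{1..n}. P (Suc (Suc i))} \<and> Q (insert (Suc 1) (S2 C))}. F (insert (Suc 1) (S2 C))) else 0)"
    using pow_peel[where n=n and P="\<lambda>i. P (Suc i)" and Q="\<lambda>B. Q (Suc ` B)" and F="\<lambda>B. F (Suc ` B)"]
    by (simp only: image_image image_insert)
  have e2: "(\<Sum>B\<in>{B. B \<subseteq> {i\<in>{1..Suc n}. P (Suc i)} \<and> Q (insert 1 (Suc ` B))}. F (insert 1 (Suc ` B))) =
     (\<Sum>C\<in>{C. C \<subseteq> {i\<in>{1..n}. P (Suc (Suc i))} \<and> Q (insert 1 (S2 C))}. F (insert 1 (S2 C)))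
   + (if P (Suc 1) then (\<Sum>C\<in>{C. C \<subseteq> {i\<in>{1..n}. P (Suc (Suc i))} \<and> Q (insert 1 (insert (Suc 1) (S2 C)))}. F (insert 1 (insert (Suc 1) (S2 C)))) else 0)"
    using pow_peel[where n=n and P="\<lambda>i. P (Suc i)" and Q="\<lambda>B. Q (insert 1 (Suc ` B))" and F="\<lambda>B. F (insert 1 (Suc ` B))"]
    by (simp only: image_image image_insert)
  show ?thesis
    unfolding pow_peel[where n="Suc n" and P=P and Q=Q and F=F] e1 e2 by (cases "P 1") (simp_all add: algebra_simps)
qed

lemma S2_mem: "X \<subseteq> {1,2} \<Longrightarrow> x \<ge> 1 \<Longrightarrow> Suc (Suc x) \<in> X \<union> S2 C \<longleftrightarrow> x \<in> C"
  by auto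

lemma Q_shift:
  assumes "X \<subseteq> {1,2}" "0 \<notin> C"
  shows "(\<forall>r\<in>{1..Suc m}. \<not> {2*r-1, 2*r} \<subseteq> X \<union> S2 C) \<longleftrightarrow> \<not> {1,2} \<subseteq> X \<and> (\<forall>r\<in>{1..m}. \<not> {2*r-1, 2*r} \<subseteq> C)"
proof -
  have set: "{1..Suc m} = insert 1 (Suc ` {1..m})" by (auto simp: image_iff)
  have r1: "{2*1-1, 2*1} \<subseteq> X \<union> S2 C \<longleftrightarrow> {1,2} \<subseteq> X" using assms by auto
  have rS: "{2*Suc r-1, 2*Suc r} \<subseteq> X \<union> S2 C \<longleftrightarrow> {2*r-1, 2*r} \<subseteq> C" if "r \<ge> 1" for r
  proof -
    have e: "2*Suc r-1 = Suc (Suc (2*r-1))" "2*Suc r = Suc (Suc (2*r))" using that by auto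
    have "2*r-1 \<ge> 1" "2*r \<ge> 1" using that by auto
    then have m: "Suc (Suc (2*r-1)) \<in> X \<union> S2 C \<longleftrightarrow> 2*r-1 \<in> C" "Suc (Suc (2*r)) \<in> X \<union> S2 C \<longleftrightarrow> 2*r \<in> C"
      using S2_mem[OF assms(1)] by blast+
    have e2: "Suc (Suc (2*r)) - 1 = Suc (Suc (2*r-1))" using that by simp
    show ?thesis unfolding e insert_subset by (simp only: e2 m empty_subsetI simp_thms)
  qed
  show ?thesis
  proof
    assume H: "\<forall>r\<in>{1..Suc m}. \<not> {2*r-1, 2*r} \<subseteq> X \<union> S2 C"
    have "(1::nat) \<in> {1..Suc m}" by simp
    then have "\<not> {2*1-1, 2*1} \<subseteq> X \<union> S2 C" by (rule bspec[OF H])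
    then have "\<not> {1,2} \<subseteq> X" using r1 by (rule back_subst[where P="\<lambda>x. \<not> x"])
    moreover have "\<forall>r\<in>{1..m}. \<not> {2*r-1, 2*r} \<subseteq> C"
    proof
      fix r assume r: "r \<in> {1..m}"
      then have "Suc r \<in> {1..Suc m}" by auto
      then have "\<not> {2*Suc r-1, 2*Suc r} \<subseteq> X \<union> S2 C" by (rule bspec[OF H])
      moreover have "r \<ge> 1" using r by simp
      ultimately show "\<not> {2*r-1, 2*r} \<subseteq> C" using rS by blast
    qed
    ultimately show "\<not> {1,2} \<subseteq> X \<and> (\<forall>r\<in>{1..m}. \<not> {2*r-1, 2*r} \<subseteq> C)" by blast
  next
    assume H: "\<not> {1,2} \<subseteq> X \<and> (\<forall>r\<in>{1..m}. \<not> {2*r-1, 2*r} \<subseteq> C)"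
    show "\<forall>r\<in>{1..Suc m}. \<not> {2*r-1, 2*r} \<subseteq> X \<union> S2 C"
    proof
      fix r assume r: "r \<in> {1..Suc m}"
      show "\<not> {2*r-1, 2*r} \<subseteq> X \<union> S2 C"
      proof (cases "r = 1")
        case True then show ?thesis using H r1 by (simp only: mult_1_right) blast
      next
        case False
        then obtain r' where r': "r = Suc r'" "r' \<in> {1..m}" using r by (cases r) auto
        have "r' \<ge> 1" using r' by simp
        have "\<not> {2*r'-1, 2*r'} \<subseteq> C" using bspec[OF conjunct2[OF H] r'(2)] .
        then show ?thesis unfolding r'(1) using rS[OF \<open>r' \<ge> 1\<close>] by blast
      qed
    qed
  qed
qed

lemma md_eq: "(\<And>i. i \<ge> 1 \<Longrightarrow> i \<in> B \<longleftrightarrow> i \<in> B') \<Longrightarrow> minus_delta c B = minus_delta c B'"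
  unfolding minus_delta_def by auto

lemma dp_eq: "(\<And>i. i \<ge> 1 \<Longrightarrow> i \<in> B \<longleftrightarrow> i \<in> B') \<Longrightarrow> delete_pos c B = delete_pos c B'"
proof -
  assume h: "\<And>i. i \<ge> 1 \<Longrightarrow> i \<in> B \<longleftrightarrow> i \<in> B'"
  have "filter (\<lambda>i. i + 1 \<notin> B) [0..<length c] = filter (\<lambda>i. i + 1 \<notin> B') [0..<length c]"
    by (rule filter_cong) (use h in auto)
  then show ?thesis unfolding delete_pos_def by simp
qed

lemma md_S2:
  assumes "X \<subseteq> {1,2}" "0 \<notin> C"
  shows "minus_delta (a#b#c) (X \<union> S2 C) = (a - (if 1 \<in> X then 1 else 0)) # (b - (if Suc 1 \<in> X then 1 else 0)) # minus_delta c C"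
proof -
  have "minus_delta c {i. Suc i \<in> {i. Suc i \<in> X \<union> S2 C}} = minus_delta c C"
    by (rule md_eq) (use assms in auto)
  moreover have "1 \<in> X \<union> S2 C \<longleftrightarrow> 1 \<in> X" "Suc 1 \<in> X \<union> S2 C \<longleftrightarrow> Suc 1 \<in> X" using assms by auto
  ultimately show ?thesis by (simp add: minus_delta_Cons)
qed

lemma dp_S2:
  assumes "X \<subseteq> {1,2}" "0 \<notin> C"
  shows "delete_pos (a#b#c) (X \<union> S2 C) = (if 1 \<in> X then [] else [a]) @ (if Suc 1 \<in> X then [] else [b]) @ delete_pos c C"
proof -
  have "delete_pos c {i. Suc i \<in> {i. Suc i \<in> X \<union> S2 C}} = delete_pos c C"
    by (rule dp_eq) (use assms in auto)
  moreover have "1 \<in> X \<union> S2 C \<longleftrightarrow> 1 \<in> X" "Suc 1 \<in> X \<union> S2 C \<longleftrightarrow> Suc 1 \<in> X" using assms by auto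
  ultimately show ?thesis by (simp add: delete_pos_Cons)
qed

lemma card_S2:
  assumes "X \<subseteq> {1,2}" "finite C" "0 \<notin> C"
  shows "card (X \<union> S2 C) = card X + card C"
proof -
  have "finite X" using assms(1) by (rule finite_subset) simp
  moreover have "X \<inter> S2 C = {}" using assms by auto
  moreover have "card (S2 C) = card C" by (rule card_image) (auto simp: inj_on_def)
  ultimately show ?thesis using assms by (simp add: card_Un_disjoint)
qed

definition LA :: "nat list \<Rightarrow> nat set set" where
  "LA c = {A. A \<subseteq> {i\<in>{1..length c}. c!(i-1) > 1} \<and> (\<forall>r\<in>{1..length c div 2}. \<not> {2*r-1, 2*r} \<subseteq> A)}"

definition Lg :: "nat \<Rightarrow> nat list \<Rightarrow> (nat \<Rightarrow> real) \<Rightarrow> nat \<Rightarrow> real" where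
  "Lg N c \<phi> s = (\<Sum>A\<in>LA c. (-1) ^ card A / real N ^ card A * zc N (zidx (minus_delta c A)) \<phi> s)"

definition blk :: "nat \<Rightarrow> nat \<Rightarrow> nat list" where
  "blk a b = replicate (a - 1) 1 @ [b + 1]"

lemma Lg_term:
  assumes X: "X \<subseteq> {1, Suc 1}" "\<not> {1, 2} \<subseteq> X"
  shows "(\<Sum>C\<in>{C. C \<subseteq> {i\<in>{1..length c}. 1 < c!(i-1)} \<and> (\<forall>r\<in>{1..Suc (length c div 2)}. \<not> {2*r-1, 2*r} \<subseteq> X \<union> S2 C)}.
      (-1) ^ card (X \<union> S2 C) / real N ^ card (X \<union> S2 C) * zc N (zidx (minus_delta (a#b#c) (X \<union> S2 C))) \<phi> s)
    = (-1) ^ card X / real N ^ card X * zc N (blk (a - (if 1 \<in> X then 1 else 0)) (b - (if Suc 1 \<in> X then 1 else 0))) (Lg N c \<phi>) s"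
proof -
  let ?a = "a - (if 1 \<in> X then 1 else 0)" and ?b = "b - (if Suc 1 \<in> X then 1 else 0)"
  have X': "X \<subseteq> {1,2}" using X(1) by (simp add: numeral_2_eq_2)
  have set: "{C. C \<subseteq> {i\<in>{1..length c}. 1 < c!(i-1)} \<and> (\<forall>r\<in>{1..Suc (length c div 2)}. \<not> {2*r-1, 2*r} \<subseteq> X \<union> S2 C)} = LA c"
  proof -
    have "\<And>C. C \<subseteq> {i\<in>{1..length c}. 1 < c!(i-1)} \<Longrightarrow> 0 \<notin> C" by auto
    then show ?thesis unfolding LA_def using Q_shift[OF X'] X(2) by blast
  qed
  have "(\<Sum>C\<in>LA c. (-1) ^ card (X \<union> S2 C) / real N ^ card (X \<union> S2 C) * zc N (zidx (minus_delta (a#b#c) (X \<union> S2 C))) \<phi> s)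
      = (\<Sum>C\<in>LA c. (-1) ^ card X / real N ^ card X * zc N (blk ?a ?b) (\<lambda>t. (-1) ^ card C / real N ^ card C * zc N (zidx (minus_delta c C)) \<phi> t) s)"
  proof (rule sum.cong[OF refl])
    fix C assume "C \<in> LA c"
    then have C: "finite C" "0 \<notin> C" unfolding LA_def by (auto intro: finite_subset)
    have "zc N (zidx (minus_delta (a#b#c) (X \<union> S2 C))) \<phi> s = zc N (blk ?a ?b) (zc N (zidx (minus_delta c C)) \<phi>) s"
      unfolding md_S2[OF X' C(2)] zidx_Cons2 zc_append blk_def ..
    then show "(-1) ^ card (X \<union> S2 C) / real N ^ card (X \<union> S2 C) * zc N (zidx (minus_delta (a#b#c) (X \<union> S2 C))) \<phi> s
      = (-1) ^ card X / real N ^ card X * zc N (blk ?a ?b) (\<lambda>t. (-1) ^ card C / real N ^ card C * zc N (zidx (minus_delta c C)) \<phi> t) s"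
      unfolding card_S2[OF X' C] zc_scale by (simp add: power_add)
  qed
  also have "\<dots> = (-1) ^ card X / real N ^ card X * zc N (blk ?a ?b) (Lg N c \<phi>) s"
    unfolding Lg_def sum_distrib_left[symmetric] zc_sum[symmetric] ..
  finally show ?thesis unfolding set .
qed

lemma Lg_Cons2:
  "Lg N (a#b#c) \<phi> s = zc N (blk a b) (Lg N c \<phi>) s
     - (if 1 < b then zc N (blk a (b - 1)) (Lg N c \<phi>) s / real N else 0)
     - (if 1 < a then zc N (blk (a - 1) b) (Lg N c \<phi>) s / real N else 0)"
proof -
  let ?P = "\<lambda>i. 1 < (a#b#c)!(i-1)"
  let ?Q = "\<lambda>A. \<forall>r\<in>{1..Suc (length c div 2)}. \<not> {2*r-1, 2*r} \<subseteq> A"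
  let ?F = "\<lambda>A. (-1) ^ card A / real N ^ card A * zc N (zidx (minus_delta (a#b#c) A)) \<phi> s"
  let ?I = "{i\<in>{1..length c}. 1 < c!(i-1)}"
  have I: "{i\<in>{1..length c}. ?P (Suc (Suc i))} = ?I" by (auto simp: nth_Cons')
  have "Lg N (a#b#c) \<phi> s = (\<Sum>A\<in>{A. A \<subseteq> {i\<in>{1..Suc (Suc (length c))}. ?P i} \<and> ?Q A}. ?F A)"
    unfolding Lg_def LA_def by simp
  also have "\<dots> = (\<Sum>C\<in>{C. C \<subseteq> ?I \<and> ?Q (S2 C)}. ?F (S2 C))
   + (if ?P (Suc 1) then (\<Sum>C\<in>{C. C \<subseteq> ?I \<and> ?Q (insert (Suc 1) (S2 C))}. ?F (insert (Suc 1) (S2 C))) else 0)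
   + (if ?P 1 then (\<Sum>C\<in>{C. C \<subseteq> ?I \<and> ?Q (insert 1 (S2 C))}. ?F (insert 1 (S2 C))) else 0)
   + (if ?P 1 \<and> ?P (Suc 1) then (\<Sum>C\<in>{C. C \<subseteq> ?I \<and> ?Q (insert 1 (insert (Suc 1) (S2 C)))}. ?F (insert 1 (insert (Suc 1) (S2 C)))) else 0)"
    by (rule pow_peel2[where n="length c" and P="?P" and Q="?Q" and F="?F", unfolded I])
  also have "(\<Sum>C\<in>{C. C \<subseteq> ?I \<and> ?Q (S2 C)}. ?F (S2 C)) = zc N (blk a b) (Lg N c \<phi>) s"
    using Lg_term[where X="{}" and c=c and N=N and a=a and b=b and \<phi>=\<phi> and s=s] by simp
  also have "(\<Sum>C\<in>{C. C \<subseteq> ?I \<and> ?Q (insert (Suc 1) (S2 C))}. ?F (insert (Suc 1) (S2 C))) = - (zc N (blk a (b - 1)) (Lg N c \<phi>) s / real N)"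
    using Lg_term[where X="{Suc 1}" and c=c and N=N and a=a and b=b and \<phi>=\<phi> and s=s] by simp
  also have "(\<Sum>C\<in>{C. C \<subseteq> ?I \<and> ?Q (insert 1 (S2 C))}. ?F (insert 1 (S2 C))) = - (zc N (blk (a - 1) b) (Lg N c \<phi>) s / real N)"
    using Lg_term[where X="{1}" and c=c and N=N and a=a and b=b and \<phi>=\<phi> and s=s] by simp
  also have "{C. C \<subseteq> ?I \<and> ?Q (insert 1 (insert (Suc 1) (S2 C)))} = {}"
  proof -
    have "\<not> ?Q (insert 1 (insert (Suc 1) Y))" for Y
    proof
      assume "?Q (insert 1 (insert (Suc 1) Y))"
      moreover have "(1::nat) \<in> {1..Suc (length c div 2)}" by simp
      ultimately have "\<not> {2*1-1, 2*1} \<subseteq> insert 1 (insert (Suc 1) Y)" by blast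
      moreover have "{2*1-1, 2*(1::nat)} \<subseteq> insert 1 (insert (Suc 1) Y)" by simp
      ultimately show False by blast
    qed
    then show ?thesis by blast
  qed
  finally show ?thesis by simp
qed

lemma oe_odd: "odd_even A \<Longrightarrow> i \<in> A \<Longrightarrow> odd i \<Longrightarrow> i + 1 \<in> A"
  unfolding odd_even_def by blast

lemma oe_even: "odd_even A \<Longrightarrow> i \<in> A \<Longrightarrow> even i \<Longrightarrow> i - 1 \<in> A"
  unfolding odd_even_def by blast

lemma odd_even_S2:
  assumes X: "X \<subseteq> {1, Suc 1}" and C: "0 \<notin> C"
  shows "odd_even (X \<union> S2 C) \<longleftrightarrow> (1 \<in> X \<longleftrightarrow> Suc 1 \<in> X) \<and> odd_even C"
proof -
  have X': "X \<subseteq> {1,2}" using X by (simp add: numeral_2_eq_2)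
  have mem: "\<And>x. x \<ge> 1 \<Longrightarrow> Suc (Suc x) \<in> X \<union> S2 C \<longleftrightarrow> x \<in> C" using S2_mem[OF X'] by blast
  have m1: "1 \<in> X \<union> S2 C \<longleftrightarrow> 1 \<in> X" and m2: "Suc 1 \<in> X \<union> S2 C \<longleftrightarrow> Suc 1 \<in> X" using C by auto
  show ?thesis
  proof
    assume H: "odd_even (X \<union> S2 C)"
    have "1 \<in> X \<longleftrightarrow> Suc 1 \<in> X"
    proof
      assume "1 \<in> X" then have "1 \<in> X \<union> S2 C" by simp
      then have "1 + 1 \<in> X \<union> S2 C" using oe_odd[OF H] by simp
      then show "Suc 1 \<in> X" using m2 by simp
    next
      assume "Suc 1 \<in> X" then have "Suc 1 \<in> X \<union> S2 C" by simp
      then have "Suc 1 - 1 \<in> X \<union> S2 C" by (rule oe_even[OF H]) simp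
      then show "1 \<in> X" using m1 by simp
    qed
    moreover have "odd_even C" unfolding odd_even_def
    proof
      fix i assume i: "i \<in> C"
      then have i1: "i \<ge> 1" using C by (cases i) auto
      have A: "Suc (Suc i) \<in> X \<union> S2 C" using i by simp
      show "(odd i \<longrightarrow> i + 1 \<in> C) \<and> (even i \<longrightarrow> i - 1 \<in> C)"
      proof (intro conjI impI)
        assume "odd i"
        then have "Suc (Suc i) + 1 \<in> X \<union> S2 C" using oe_odd[OF H A] by simp
        then have "Suc (Suc (i + 1)) \<in> X \<union> S2 C" by simp
        then show "i + 1 \<in> C" using mem[of "i+1"] by simp
      next
        assume e: "even i"
        then have i2: "i \<ge> 2" using i1 by presburger
        have "Suc (Suc i) - 1 \<in> X \<union> S2 C" using oe_even[OF H A] e by simp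
        moreover have "Suc (Suc i) - 1 = Suc (Suc (i - 1))" using i2 by simp
        ultimately have "Suc (Suc (i - 1)) \<in> X \<union> S2 C" by simp
        then show "i - 1 \<in> C" using mem[of "i-1"] i2 by simp
      qed
    qed
    ultimately show "(1 \<in> X \<longleftrightarrow> Suc 1 \<in> X) \<and> odd_even C" by blast
  next
    assume H: "(1 \<in> X \<longleftrightarrow> Suc 1 \<in> X) \<and> odd_even C"
    show "odd_even (X \<union> S2 C)" unfolding odd_even_def
    proof
      fix j assume j: "j \<in> X \<union> S2 C"
      show "(odd j \<longrightarrow> j + 1 \<in> X \<union> S2 C) \<and> (even j \<longrightarrow> j - 1 \<in> X \<union> S2 C)"
      proof (cases "j \<in> X")
        case True
        then have "j = 1 \<or> j = Suc 1" using X by auto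
        then show ?thesis using H True by auto
      next
        case False
        then obtain i where ji: "j = Suc (Suc i)" and i: "i \<in> C" using j by auto
        then have i1: "i \<ge> 1" using C by (cases i) auto
        have oe: "(odd i \<longrightarrow> i + 1 \<in> C) \<and> (even i \<longrightarrow> i - 1 \<in> C)" using H i unfolding odd_even_def by blast
        show ?thesis
        proof (intro conjI impI)
          assume "odd j" then have "odd i" using ji by simp
          then have "i + 1 \<in> C" using oe by blast
          then have "Suc (Suc (i+1)) \<in> X \<union> S2 C" using mem[of "i+1"] by simp
          then show "j + 1 \<in> X \<union> S2 C" using ji by simp
        next
          assume "even j" then have e: "even i" using ji by simp
          then have i2: "i \<ge> 2" using i1 by presburger
          have "i - 1 \<in> C" using oe e by blast
          then have "Suc (Suc (i-1)) \<in> X \<union> S2 C" using mem[of "i-1"] i2 by simp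
          moreover have "j - 1 = Suc (Suc (i - 1))" using ji i2 by simp
          ultimately show "j - 1 \<in> X \<union> S2 C" by simp
        qed
      qed
    qed
  qed
qed

definition RA :: "nat list \<Rightarrow> nat set set" where
  "RA c = {A. A \<subseteq> {i\<in>{1..length c}. c!(i-1) = 1} \<and> odd_even A}"

definition Rg :: "nat \<Rightarrow> nat list \<Rightarrow> (nat \<Rightarrow> real) \<Rightarrow> nat \<Rightarrow> real" where
  "Rg N c \<phi> y = (\<Sum>A\<in>RA c. (-1) ^ (card A div 2) / real N ^ card A * hc N (delete_pos c A) True \<phi> y)"

lemma Rg_set:
  assumes X: "X \<subseteq> {1, Suc 1}" "1 \<in> X \<longleftrightarrow> Suc 1 \<in> X"
  shows "{C. C \<subseteq> {i\<in>{1..length c}. c!(i-1) = 1} \<and> odd_even (X \<union> S2 C)} = RA c"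
proof -
  have "\<And>C. C \<subseteq> {i\<in>{1..length c}. c!(i-1) = 1} \<Longrightarrow> 0 \<notin> C" by auto
  then show ?thesis unfolding RA_def using odd_even_S2[OF X(1)] X(2) by blast
qed

lemma Rg_set_empty:
  assumes X: "X \<subseteq> {1, Suc 1}" "\<not> (1 \<in> X \<longleftrightarrow> Suc 1 \<in> X)"
  shows "{C. C \<subseteq> {i\<in>{1..length c}. c!(i-1) = 1} \<and> odd_even (X \<union> S2 C)} = {}"
proof -
  have "\<And>C. C \<subseteq> {i\<in>{1..length c}. c!(i-1) = 1} \<Longrightarrow> 0 \<notin> C" by auto
  then show ?thesis using odd_even_S2[OF X(1)] X(2) by blast
qed

lemma Rg_Cons2:
  "Rg N (a#b#c) \<phi> y = hc N [a,b] True (Rg N c \<phi>) y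
     + (if a = 1 \<and> b = 1 then - (Rg N c \<phi> y / real N ^ 2) else 0)"
proof -
  let ?P = "\<lambda>i. (a#b#c)!(i-1) = 1"
  let ?Q = "odd_even"
  let ?F = "\<lambda>A. (-1) ^ (card A div 2) / real N ^ card A * hc N (delete_pos (a#b#c) A) True \<phi> y"
  let ?I = "{i\<in>{1..length c}. c!(i-1) = 1}"
  have I: "{i\<in>{1..length c}. ?P (Suc (Suc i))} = ?I" by (auto simp: nth_Cons')
  have "Rg N (a#b#c) \<phi> y = (\<Sum>A\<in>{A. A \<subseteq> {i\<in>{1..Suc (Suc (length c))}. ?P i} \<and> ?Q A}. ?F A)"
    unfolding Rg_def RA_def by simp
  also have "\<dots> = (\<Sum>C\<in>{C. C \<subseteq> ?I \<and> ?Q (S2 C)}. ?F (S2 C))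
   + (if ?P (Suc 1) then (\<Sum>C\<in>{C. C \<subseteq> ?I \<and> ?Q (insert (Suc 1) (S2 C))}. ?F (insert (Suc 1) (S2 C))) else 0)
   + (if ?P 1 then (\<Sum>C\<in>{C. C \<subseteq> ?I \<and> ?Q (insert 1 (S2 C))}. ?F (insert 1 (S2 C))) else 0)
   + (if ?P 1 \<and> ?P (Suc 1) then (\<Sum>C\<in>{C. C \<subseteq> ?I \<and> ?Q (insert 1 (insert (Suc 1) (S2 C)))}. ?F (insert 1 (insert (Suc 1) (S2 C)))) else 0)"
    by (rule pow_peel2[where n="length c" and P="?P" and Q="?Q" and F="?F", unfolded I])
  also have "(\<Sum>C\<in>{C. C \<subseteq> ?I \<and> ?Q (S2 C)}. ?F (S2 C)) = hc N [a,b] True (Rg N c \<phi>) y"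
  proof -
    have set: "{C. C \<subseteq> ?I \<and> ?Q (S2 C)} = RA c" using Rg_set[of "{}" c] by simp
    have "(\<Sum>C\<in>RA c. ?F (S2 C)) = (\<Sum>C\<in>RA c. hc N [a,b] True (\<lambda>t. (-1) ^ (card C div 2) / real N ^ card C * hc N (delete_pos c C) True \<phi> t) y)"
    proof (rule sum.cong[OF refl])
      fix C assume "C \<in> RA c"
      then have C: "finite C" "0 \<notin> C" unfolding RA_def by (auto intro: finite_subset)
      have e: "S2 C = {} \<union> S2 C" by simp
      have "delete_pos (a#b#c) (S2 C) = [a,b] @ delete_pos c C"
        using dp_S2[of "{}" C a b c] C by simp
      moreover have "card (S2 C) = card C" using card_S2[of "{}" C] C by simp
      moreover have "hc N ([a,b] @ delete_pos c C) True \<phi> = hc N [a,b] True (hc N (delete_pos c C) True \<phi>)"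
        using hc_append[of N "[a,b]" "delete_pos c C" True \<phi>] by simp
      ultimately show "?F (S2 C) = hc N [a,b] True (\<lambda>t. (-1) ^ (card C div 2) / real N ^ card C * hc N (delete_pos c C) True \<phi> t) y"
        by (simp only: hc_scale)
    qed
    also have "\<dots> = hc N [a,b] True (Rg N c \<phi>) y"
      unfolding Rg_def hc_sum[symmetric] ..
    finally show ?thesis unfolding set .
  qed
  also have "{C. C \<subseteq> ?I \<and> ?Q (insert (Suc 1) (S2 C))} = {}"
    using Rg_set_empty[of "{Suc 1}" c] by simp
  also have "{C. C \<subseteq> ?I \<and> ?Q (insert 1 (S2 C))} = {}"
    using Rg_set_empty[of "{1}" c] by simp
  also have "(if ?P 1 \<and> ?P (Suc 1) then (\<Sum>C\<in>{C. C \<subseteq> ?I \<and> ?Q (insert 1 (insert (Suc 1) (S2 C)))}. ?F (insert 1 (insert (Suc 1) (S2 C)))) else 0)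
      = (if a = 1 \<and> b = 1 then - (Rg N c \<phi> y / real N ^ 2) else 0)"
  proof (cases "a = 1 \<and> b = 1")
    case True
    have set: "{C. C \<subseteq> ?I \<and> ?Q (insert 1 (insert (Suc 1) (S2 C)))} = RA c" using Rg_set[of "{1, Suc 1}" c] by simp
    have "(\<Sum>C\<in>RA c. ?F (insert 1 (insert (Suc 1) (S2 C)))) = (\<Sum>C\<in>RA c. - ((-1) ^ (card C div 2) / real N ^ card C * hc N (delete_pos c C) True \<phi> y / real N ^ 2))"
    proof (rule sum.cong[OF refl])
      fix C assume "C \<in> RA c"
      then have C: "finite C" "0 \<notin> C" unfolding RA_def by (auto intro: finite_subset)
      have e: "insert 1 (insert (Suc 1) (S2 C)) = {1, Suc 1} \<union> S2 C" by simp
      have "delete_pos (a#b#c) ({1, Suc 1} \<union> S2 C) = delete_pos c C"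
        using dp_S2[of "{1, Suc 1}" C a b c] C by (simp add: numeral_2_eq_2)
      moreover have "card ({1, Suc 1} \<union> S2 C) = Suc (Suc (card C))" using card_S2[of "{1, Suc 1}" C] C by (simp add: numeral_2_eq_2)
      ultimately show "?F (insert 1 (insert (Suc 1) (S2 C))) = - ((-1) ^ (card C div 2) / real N ^ card C * hc N (delete_pos c C) True \<phi> y / real N ^ 2)"
        unfolding e by (simp add: power2_eq_square)
    qed
    then show ?thesis using True unfolding set Rg_def by (simp add: sum_negf sum_divide_distrib)
  next
    case False
    then have h: "\<not> (?P 1 \<and> ?P (Suc 1))" by simp
    show ?thesis by (simp only: if_not_P[OF h] if_not_P[OF False])
  qed
  finally show ?thesis by simp
qed

definition Osp :: "nat \<Rightarrow> bool \<Rightarrow> (nat \<Rightarrow> real) \<Rightarrow> nat \<Rightarrow> real" where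
  "Osp N p g y = (\<Sum>n\<in>{Suc y..<N}. wt N p n * g n)"

lemma hc_Cons_Osp: "hc N (e#ds) p \<phi> y = Osp N p ((Wp N p ^^ (e - 1)) (hc N ds (\<not>p) \<phi>)) y + (if e = 1 then hc N ds (\<not>p) \<phi> y / real N else 0)"
  by (simp add: Osp_def)

lemma Osp_add: "Osp N p (\<lambda>t. f t + g t) y = Osp N p f y + Osp N p g y"
  by (simp add: Osp_def algebra_simps sum.distrib)

lemma Osp_scale: "Osp N p (\<lambda>t. c * f t) y = c * Osp N p f y"
  by (simp add: Osp_def algebra_simps sum_distrib_left)

lemma Osp_cong: "(\<And>t. t < N \<Longrightarrow> f t = g t) \<Longrightarrow> Osp N p f y = Osp N p g y"
  by (simp add: Osp_def)

lemma Wp_pow_add: "(Wp N p ^^ j) (\<lambda>t. f t + g t) y = (Wp N p ^^ j) f y + (Wp N p ^^ j) g y"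
proof (induction j arbitrary: y)
  case 0 then show ?case by simp
next
  case (Suc j) show ?case by (simp only: Wp_Suc Suc.IH) (simp add: algebra_simps sum.distrib)
qed

lemma Wp_add: "Wp N p (\<lambda>t. f t + g t) y = Wp N p f y + Wp N p g y"
  using Wp_pow_add[where N=N and p=p and j=1 and f=f and g=g and y=y] by simp

lemma Wp_scale: "Wp N p (\<lambda>t. c * f t) y = c * Wp N p f y"
  using Wp_pow_scale[where N=N and p=p and j=1 and c=c and f=f and y=y] by simp

lemma Wp_cong: "(\<And>t. t < N \<Longrightarrow> f t = g t) \<Longrightarrow> Wp N p f y = Wp N p g y"
  by (simp add: Wp_def)

lemma F1: "y < N \<Longrightarrow> Wp N False \<phi> y = Osp N False \<phi> y + \<phi> y / real y"
proof (cases "y = 0")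
  case True
  then show ?thesis by (simp add: Wp_def Osp_def wt_def)
next
  case False
  assume "y < N"
  then have "{max 1 y..<N} = insert y {Suc y..<N}" using False by auto
  then show ?thesis by (simp add: Wp_def Osp_def wt_def)
qed

lemma pf: "0 < n \<Longrightarrow> n < N \<Longrightarrow> 1 / (real N - real n) * (x / real n) = (x / real n + 1 / (real N - real n) * x) / real N"
proof -
  assume h: "0 < n" "n < N"
  then have "real N - real n \<noteq> 0" "real n \<noteq> 0" "real N \<noteq> 0" by auto
  then show ?thesis by (simp add: field_simps)
qed

lemma pf2: "0 < n \<Longrightarrow> n < N \<Longrightarrow> x / ((real N - real n) * real n) = (x / real n + x / (real N - real n)) / real N"
proof -
  assume h: "0 < n" "n < N"
  then have "real N - real n \<noteq> 0" "real n \<noteq> 0" "real N \<noteq> 0" by auto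
  then show ?thesis by (simp add: field_simps)
qed

lemma F2: "Osp N True (\<lambda>n. \<phi> n / real n) y = (Osp N False \<phi> y + Osp N True \<phi> y) / real N"
  unfolding Osp_def wt_def
  by (simp add: sum_divide_distrib sum.distrib[symmetric]) (rule sum.cong, auto simp: pf2)

lemma F3: "Wp N True (\<lambda>n. \<phi> n / real n) y = (Wp N False \<phi> y + Wp N True \<phi> y) / real N"
  unfolding Wp_def wt_def
  by (simp add: sum_divide_distrib sum.distrib[symmetric]) (rule sum.cong, auto simp: pf2)

lemma Osp_lin: "Osp N p (\<lambda>t. f t + c * g t) y = Osp N p f y + c * Osp N p g y"
  by (simp add: Osp_add Osp_scale)

lemma Wpp_lin: "(Wp N p ^^ j) (\<lambda>t. f t + c * g t) y = (Wp N p ^^ j) f y + c * (Wp N p ^^ j) g y"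
  by (simp add: Wp_pow_add Wp_pow_scale)

definition G :: "nat \<Rightarrow> nat \<Rightarrow> nat \<Rightarrow> (nat \<Rightarrow> real) \<Rightarrow> nat \<Rightarrow> real" where
  "G N a b g = Osp N True ((Wp N True ^^ (a - 1)) ((Wp N False ^^ b) g))"

lemma hc_Nil_fun: "hc N [] p \<phi> = \<phi>"
  by (rule ext) simp

lemma hc_single: "hc N [b] False g t = Osp N False ((Wp N False ^^ (b - 1)) g) t + (if b = 1 then 1 / real N * g t else 0)"
  by (simp only: hc_Cons_Osp hc_Nil_fun not_False_eq_True hc.simps(1)) simp

lemma hc_pair: "hc N [a,b] True g y = Osp N True ((Wp N True ^^ (a - 1)) (hc N [b] False g)) y + (if a = 1 then hc N [b] False g y / real N else 0)"
  by (simp only: hc_Cons_Osp not_True_eq_False)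

lemma Z_eq:
  assumes "b \<ge> 1" "t < N"
  shows "(Wp N False ^^ b) g t = Osp N False ((Wp N False ^^ (b - 1)) g) t + (Wp N False ^^ (b - 1)) g t / real t"
proof -
  have "(Wp N False ^^ b) g t = Wp N False ((Wp N False ^^ (b - 1)) g) t"
    using assms(1) by (cases b) auto
  then show ?thesis using F1[OF assms(2)] by simp
qed

lemma Wp_lin_helper: "Wp N p (\<lambda>t. f t + c * g t) = (\<lambda>t. Wp N p f t + c * Wp N p g t)"
  by (rule ext) (simp add: Wp_add Wp_scale)

lemma R_identity:
  assumes ab: "a \<ge> 1" "b \<ge> 1" and N1: "N \<ge> 1"
  shows "G N a b g y - (if 1 < b then G N a (b - 1) g y / real N else 0) - (if 1 < a then G N (a - 1) b g y / real N else 0)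
    = hc N [a,b] True g y + (if a = 1 \<and> b = 1 then - (g y / real N ^ 2) else 0)"
proof -
  define Y where "Y = (Wp N False ^^ (b - 1)) g"
  define Z where "Z = (Wp N False ^^ b) g"
  have ZY: "Z = Wp N False Y" unfolding Z_def Y_def using ab(2) by (cases b) auto
  have Zt: "\<And>t. t < N \<Longrightarrow> Z t = Osp N False Y t + 1 * (Y t / real t)"
    unfolding Z_def Y_def using Z_eq[OF ab(2)] by simp
  have hcb: "hc N [b] False g = (\<lambda>t. Osp N False Y t + (if b = 1 then 1 / real N else 0) * g t)"
    unfolding Y_def by (rule ext) (simp only: hc_single, simp)
  have Yb1: "b = 1 \<Longrightarrow> Y = g" unfolding Y_def by simp
  have N0: "real N \<noteq> 0" using N1 by simp
  show ?thesis
  proof (cases "a = 1")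
    case True
    have Ga: "G N 1 b g y = Osp N True (Osp N False Y) y + (Osp N False Y y + Osp N True Y y) / real N"
    proof -
      have "G N 1 b g y = Osp N True Z y" unfolding G_def Z_def by simp
      also have "\<dots> = Osp N True (\<lambda>t. Osp N False Y t + 1 * (Y t / real t)) y" by (rule Osp_cong) (rule Zt)
      also have "\<dots> = Osp N True (Osp N False Y) y + Osp N True (\<lambda>t. Y t / real t) y" by (simp only: Osp_lin)
      finally show ?thesis by (simp only: F2)
    qed
    have hp: "hc N [1,b] True g y = Osp N True (Osp N False Y) y + (if b = 1 then 1 / real N else 0) * Osp N True g y
        + (Osp N False Y y + (if b = 1 then 1 / real N else 0) * g y) / real N"
      by (simp only: hc_pair diff_self_eq_0 funpow_0 hcb Osp_lin) simp
    show ?thesis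
    proof (cases "b = 1")
      case True
      show ?thesis unfolding \<open>a = 1\<close> Ga hp using True Yb1[OF True] N0 by (simp add: field_simps power2_eq_square)
    next
      case False
      have "G N 1 (b - 1) g y = Osp N True Y y" unfolding G_def Y_def by simp
      then show ?thesis unfolding \<open>a = 1\<close> Ga hp using False ab N0 by (simp add: field_simps)
    qed
  next
    case False
    then have a2: "a \<ge> 2" using ab by simp
    define X where "X = Wp N True ^^ (a - 2)"
    have Xs: "\<And>f. (Wp N True ^^ (a - 1)) f = X (Wp N True f)"
    proof -
      fix f
      have "a - 1 = Suc (a - 2)" using a2 by simp
      then show "(Wp N True ^^ (a - 1)) f = X (Wp N True f)" unfolding X_def by (simp only: funpow_Suc_right comp_def)
    qed
    have WZ: "Wp N True Z = (\<lambda>t. Wp N True (Osp N False Y) t + 1 / real N * (Z t + Wp N True Y t))"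
    proof (rule ext)
      fix t
      have "Wp N True Z t = Wp N True (\<lambda>t. Osp N False Y t + 1 * (Y t / real t)) t" by (rule Wp_cong) (rule Zt)
      also have "\<dots> = Wp N True (Osp N False Y) t + Wp N True (\<lambda>t. Y t / real t) t" by (simp only: Wp_add) simp
      also have "\<dots> = Wp N True (Osp N False Y) t + 1 / real N * (Z t + Wp N True Y t)" by (simp only: F3 ZY) simp
      finally show "Wp N True Z t = Wp N True (Osp N False Y) t + 1 / real N * (Z t + Wp N True Y t)" .
    qed
    have Ga: "G N a b g y = Osp N True (X (Wp N True (Osp N False Y))) y + 1 / real N * (Osp N True (X Z) y + Osp N True (X (Wp N True Y)) y)"
    proof -
      have "G N a b g y = Osp N True (X (Wp N True Z)) y" unfolding G_def Z_def Xs ..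
      also have "X (Wp N True Z) = (\<lambda>t. X (Wp N True (Osp N False Y)) t + 1 / real N * (X Z t + X (Wp N True Y) t))"
        unfolding WZ X_def by (rule ext) (simp only: Wpp_lin Wp_pow_add)
      finally show ?thesis by (simp only: Osp_lin Osp_add)
    qed
    have Ga1: "G N (a - 1) b g y = Osp N True (X Z) y"
    proof -
      have "a - 1 - 1 = a - 2" by simp
      then show ?thesis unfolding G_def Z_def X_def by simp
    qed
    have hp: "hc N [a,b] True g y = Osp N True (X (Wp N True (Osp N False Y))) y + (if b = 1 then 1 / real N else 0) * Osp N True (X (Wp N True g)) y"
    proof -
      have "hc N [a,b] True g y = Osp N True (X (Wp N True (hc N [b] False g))) y" using False by (simp only: hc_pair Xs) simp
      also have "X (Wp N True (hc N [b] False g)) = (\<lambda>t. X (Wp N True (Osp N False Y)) t + (if b = 1 then 1 / real N else 0) * X (Wp N True g) t)"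
        unfolding hcb X_def by (rule ext) (simp only: Wpp_lin Wp_lin_helper)
      finally show ?thesis by (simp only: Osp_lin)
    qed
    have Gb1: "b > 1 \<Longrightarrow> G N a (b - 1) g y = Osp N True (X (Wp N True Y)) y"
      unfolding G_def Y_def Xs ..
    show ?thesis
    proof (cases "b = 1")
      case True
      show ?thesis unfolding Ga Ga1 hp using True False Yb1[OF True] N0 a2 by (simp add: field_simps)
    next
      case b1: False
      have "b > 1" using b1 ab by simp
      show ?thesis unfolding Ga Ga1 hp Gb1[OF \<open>b > 1\<close>] using b1 False N0 a2 ab by (simp add: field_simps)
    qed
  qed
qed

lemma choose_step: "Suc k * (n choose Suc k) = (n - k) * (n choose k)"
  using binomial_absorption[of k n] binomial_absorb_comp[of n k] by simp

lemma hockey: "(\<Sum>t\<in>{Suc j..y}. (t - 1) choose j) = y choose Suc j"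
proof (induction y)
  case 0 then show ?case by simp
next
  case (Suc y)
  show ?case
  proof (cases "Suc j \<le> Suc y")
    case True
    then have "{Suc j..Suc y} = insert (Suc y) {Suc j..y}" by auto
    then show ?thesis using Suc by simp
  next
    case False
    then show ?thesis by simp
  qed
qed

definition K :: "nat \<Rightarrow> nat \<Rightarrow> nat \<Rightarrow> real" where
  "K N s t = real ((t - 1) choose (s - 1)) / ((real N - real t) * real ((N - 1) choose (s - 1)))"

definition Tc :: "nat \<Rightarrow> nat \<Rightarrow> nat \<Rightarrow> real" where
  "Tc N s y = real ((y - 1) choose (s - 2)) / real ((N - 1) choose (s - 1))"

lemma choose_step_real:
  assumes "1 \<le> s" "s < N"
  shows "real s * real ((N - 1) choose s) = (real N - real s) * real ((N - 1) choose (s - 1))"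
proof -
  have "Suc (s - 1) * ((N - 1) choose Suc (s - 1)) = (N - 1 - (s - 1)) * ((N - 1) choose (s - 1))"
    by (rule choose_step)
  moreover have "Suc (s - 1) = s" "N - 1 - (s - 1) = N - s" using assms by auto
  ultimately have "s * ((N - 1) choose s) = (N - s) * ((N - 1) choose (s - 1))" by simp
  then have "real (s * ((N - 1) choose s)) = real ((N - s) * ((N - 1) choose (s - 1)))" by simp
  then show ?thesis using assms by (simp add: of_nat_diff)
qed

lemma alg1:
  assumes "(n::real) - s \<noteq> 0" "n - t \<noteq> 0" "B \<noteq> 0"
  shows "(A / B - (t - s) * A / ((n - s) * B)) / (n - t) = A / (B * (n - s))"
proof -
  have "A / B = A * (n - s) / ((n - s) * B)" using assms by simp
  then have "A / B - (t - s) * A / ((n - s) * B) = (A * (n - s) - (t - s) * A) / ((n - s) * B)"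
    by (simp add: diff_divide_distrib)
  also have "A * (n - s) - (t - s) * A = A * (n - t)" by (simp add: algebra_simps)
  finally have "(A / B - (t - s) * A / ((n - s) * B)) / (n - t) = A * (n - t) / ((n - s) * B) / (n - t)" by simp
  also have "\<dots> = A / ((n - s) * B)" using assms(2) by simp
  finally show ?thesis by (simp add: mult.commute)
qed

lemma L3:
  assumes "1 \<le> s" "s < N" "1 \<le> t" "t < N"
  shows "K N s t - K N (Suc s) t = real ((t - 1) choose (s - 1)) / (real ((N - 1) choose (s - 1)) * (real N - real s))"
proof -
  define A where "A = real ((t - 1) choose (s - 1))"
  define B where "B = real ((N - 1) choose (s - 1))"
  have B0: "B > 0" unfolding B_def using assms by simp
  have Ns: "real N - real s > 0" "real N - real t > 0" using assms by auto
  define A' where "A' = real ((t - 1) choose s)"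
  define B' where "B' = real ((N - 1) choose s)"
  have s0: "real s > 0" using assms by simp
  have B'0: "B' > 0" unfolding B'_def using assms by simp
  have hB: "real s * B' = (real N - real s) * B"
    using choose_step_real[OF assms(1,2)] unfolding B_def B'_def .
  have hA: "real s * A' = (real t - real s) * A"
  proof (cases "s \<le> t")
    case True
    have "Suc (s - 1) * ((t - 1) choose Suc (s - 1)) = (t - 1 - (s - 1)) * ((t - 1) choose (s - 1))"
      by (rule choose_step)
    moreover have "Suc (s - 1) = s" "t - 1 - (s - 1) = t - s" using assms True by auto
    ultimately have "s * ((t - 1) choose s) = (t - s) * ((t - 1) choose (s - 1))" by simp
    then have "real (s * ((t - 1) choose s)) = real ((t - s) * ((t - 1) choose (s - 1)))" by simp
    then show ?thesis using True unfolding A_def A'_def by (simp add: of_nat_diff)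
  next
    case False
    then have z: "(t - 1) choose s = 0" "(t - 1) choose (s - 1) = 0" using assms by (auto intro!: binomial_eq_0)
    show ?thesis unfolding A_def A'_def z by simp
  qed
  have q: "A' / B' = (real t - real s) * A / ((real N - real s) * B)"
  proof -
    have "A' / B' = (real s * A') / (real s * B')" using s0 by simp
    also have "\<dots> = (real t - real s) * A / ((real N - real s) * B)" unfolding hA hB ..
    finally show ?thesis .
  qed
  have k1: "K N s t = A / ((real N - real t) * B)" unfolding K_def A_def B_def ..
  have k2: "K N (Suc s) t = A' / ((real N - real t) * B')" unfolding K_def A'_def B'_def by simp
  have "K N s t - K N (Suc s) t = (A / B - A' / B') / (real N - real t)"
    unfolding k1 k2 diff_divide_distrib divide_divide_eq_left by (simp add: mult.commute)
  also have "\<dots> = (A / B - (real t - real s) * A / ((real N - real s) * B)) / (real N - real t)"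
    unfolding q ..
  also have "\<dots> = A / (B * (real N - real s))"
  proof -
    have nz: "real N - real s \<noteq> 0" "real N - real t \<noteq> 0" "B \<noteq> 0" using B0 Ns by auto
    show ?thesis by (rule alg1[OF nz])
  qed
  finally show ?thesis unfolding A_def B_def .
qed

lemma L4:
  assumes "1 \<le> s" "s < N"
  shows "Tc N (Suc s) y / real s = real ((y - 1) choose (s - 1)) / (real ((N - 1) choose (s - 1)) * (real N - real s))"
proof -
  have "Tc N (Suc s) y = real ((y - 1) choose (s - 1)) / real ((N - 1) choose s)"
    unfolding Tc_def using assms by (simp add: numeral_2_eq_2)
  then have "Tc N (Suc s) y / real s = real ((y - 1) choose (s - 1)) / (real s * real ((N - 1) choose s))"
    by (simp add: mult.commute)
  also have "real s * real ((N - 1) choose s) = (real N - real s) * real ((N - 1) choose (s - 1))"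
    by (rule choose_step_real[OF assms])
  finally show ?thesis by (simp add: mult.commute)
qed

lemma K_zero: "y < s \<Longrightarrow> 1 \<le> y \<Longrightarrow> K N s y = 0"
  unfolding K_def by (simp add: binomial_eq_0)

lemma Gc:
  assumes "1 \<le> s" "s \<le> Suc y" "1 \<le> y" "y < N"
  shows "(\<Sum>m\<in>{s..y}. Tc N (Suc m) y / real m) = K N s y"
  using assms(2,1)
proof (induction s rule: inc_induct)
  case base
  then show ?case using assms(3) by (simp add: K_zero)
next
  case (step n)
  have n: "1 \<le> n" "n < N" "n \<le> y" using step assms by auto
  have "{n..y} = insert n {Suc n..y}" using n by auto
  then have "(\<Sum>m\<in>{n..y}. Tc N (Suc m) y / real m) = Tc N (Suc n) y / real n + K N (Suc n) y"
    using step by simp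
  also have "\<dots> = K N n y" using L4[OF n(1,2)] L3[OF n(1,2) assms(3,4)] by simp
  finally show ?case .
qed

lemma L6:
  assumes "2 \<le> s"
  shows "(\<Sum>t\<in>{s-1..<y}. Tc N s t) = real ((y - 1) choose (s - 1)) / real ((N - 1) choose (s - 1))"
proof (cases "y = 0")
  case True
  then show ?thesis using assms by (simp add: binomial_eq_0)
next
  case False
  have "{s-1..<y} = {Suc (s - 2)..y - 1}" using False assms by auto
  then have "(\<Sum>t\<in>{s-1..<y}. real ((t - 1) choose (s - 2))) = real ((y - 1) choose Suc (s - 2))"
    using hockey[of "s - 2" "y - 1"] by (simp del: of_nat_sum add: of_nat_sum[symmetric])
  moreover have "Suc (s - 2) = s - 1" using assms by simp
  ultimately show ?thesis unfolding Tc_def by (simp add: sum_divide_distrib[symmetric])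
qed

lemma term_n:
  assumes "1 \<le> n" "n < N" "1 \<le> y" "y < N"
  shows "K N (Suc n) y / real n + K N n y / (real N - real n)
    = real (y choose n) / (real ((N - 1) choose (n - 1)) * (real N - real n) * (real N - real y))"
proof -
  define B where "B = real ((N - 1) choose (n - 1))"
  have B0: "B > 0" unfolding B_def using assms by simp
  have nz: "real n \<noteq> 0" "real N - real n \<noteq> 0" "real N - real y \<noteq> 0" using assms by auto
  have cs: "real n * real ((N - 1) choose n) = (real N - real n) * B" using choose_step_real[OF assms(1,2)] unfolding B_def .
  have pas: "y choose n = ((y - 1) choose n) + ((y - 1) choose (n - 1))"
  proof -
    have "Suc (y - 1) choose Suc (n - 1) = ((y - 1) choose (n - 1)) + ((y - 1) choose Suc (n - 1))" by simp
    moreover have "Suc (y - 1) = y" "Suc (n - 1) = n" using assms by auto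
    ultimately show ?thesis by simp
  qed
  have "K N (Suc n) y / real n = real ((y - 1) choose n) / ((real N - real y) * (real n * real ((N - 1) choose n)))"
    unfolding K_def by (simp add: mult_ac)
  also have "\<dots> = real ((y - 1) choose n) / ((real N - real y) * ((real N - real n) * B))" unfolding cs ..
  finally have k1: "K N (Suc n) y / real n = real ((y - 1) choose n) / ((real N - real y) * ((real N - real n) * B))" .
  have k2: "K N n y / (real N - real n) = real ((y - 1) choose (n - 1)) / ((real N - real y) * ((real N - real n) * B))"
    unfolding K_def B_def by (simp add: mult_ac)
  show ?thesis unfolding k1 k2 pas B_def[symmetric] by (simp add: add_divide_distrib mult_ac)
qed

lemma L7:
  assumes "1 \<le> s" "s \<le> Suc y" "1 \<le> y" "y < N"
  shows "(\<Sum>n\<in>{s..y}. K N (Suc n) y / real n + K N n y / (real N - real n)) = (\<Sum>t\<in>{s..y}. K N s t) / (real N - real y)"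
  using assms(2,1)
proof (induction s rule: inc_induct)
  case base
  then show ?case by simp
next
  case (step n)
  have n: "1 \<le> n" "n < N" "n \<le> y" using step assms by auto
  have "{n..y} = insert n {Suc n..y}" using n by auto
  then have "(\<Sum>m\<in>{n..y}. K N (Suc m) y / real m + K N m y / (real N - real m))
      = (K N (Suc n) y / real n + K N n y / (real N - real n)) + (\<Sum>t\<in>{Suc n..y}. K N (Suc n) t) / (real N - real y)"
    using step by simp
  also have "\<dots> = real (y choose n) / (real ((N - 1) choose (n - 1)) * (real N - real n) * (real N - real y))
       + (\<Sum>t\<in>{Suc n..y}. K N (Suc n) t) / (real N - real y)"
    using term_n[OF n(1,2) assms(3,4)] by simp
  also have "\<dots> = (\<Sum>t\<in>{n..y}. K N n t) / (real N - real y)"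
  proof -
    have "(\<Sum>t\<in>{n..y}. K N n t) = (\<Sum>t\<in>{n..y}. (K N n t - K N (Suc n) t)) + (\<Sum>t\<in>{n..y}. K N (Suc n) t)"
      by (simp add: sum_subtractf)
    also have "(\<Sum>t\<in>{n..y}. (K N n t - K N (Suc n) t)) = (\<Sum>t\<in>{n..y}. real ((t - 1) choose (n - 1)) / (real ((N - 1) choose (n - 1)) * (real N - real n)))"
      by (rule sum.cong[OF refl], rule L3) (use n assms in auto)
    also have "\<dots> = real (y choose n) / (real ((N - 1) choose (n - 1)) * (real N - real n))"
    proof -
      have "(\<Sum>t\<in>{Suc (n - 1)..y}. (t - 1) choose (n - 1)) = y choose Suc (n - 1)" by (rule hockey)
      moreover have "Suc (n - 1) = n" using n by simp
      ultimately have "(\<Sum>t\<in>{n..y}. real ((t - 1) choose (n - 1))) = real (y choose n)"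
        by (metis of_nat_sum)
      then show ?thesis by (simp add: sum_divide_distrib[symmetric])
    qed
    also have "(\<Sum>t\<in>{n..y}. K N (Suc n) t) = (\<Sum>t\<in>{Suc n..y}. K N (Suc n) t)"
    proof -
      have "{n..y} = insert n {Suc n..y}" using n by auto
      moreover have "K N (Suc n) n = 0" using n by (simp add: K_zero)
      ultimately show ?thesis by simp
    qed
    finally show ?thesis by (simp add: add_divide_distrib)
  qed
  finally show ?case .
qed

definition TT :: "nat \<Rightarrow> (nat \<Rightarrow> real) \<Rightarrow> nat \<Rightarrow> real" where
  "TT N g s = (if 2 \<le> s \<and> s \<le> N then (\<Sum>y\<in>{s-1..<N}. Tc N s y * g y) else g (s - 1))"

definition Vk :: "nat \<Rightarrow> nat \<Rightarrow> (nat \<Rightarrow> real) \<Rightarrow> nat \<Rightarrow> real" where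
  "Vk N k \<psi> s = (\<Sum>m\<in>{max 1 s..<N}. \<psi> (Suc m) / real m ^ k)"

definition U :: "nat \<Rightarrow> (nat \<Rightarrow> real) \<Rightarrow> nat \<Rightarrow> real" where
  "U N \<psi> s = (\<Sum>m\<in>{max 1 s..<N}. \<psi> (Suc m) / real m + \<psi> m / (real N - real m))"

lemma tri_swap: "(\<Sum>m\<in>{a..<N::nat}. \<Sum>y\<in>{m..<N}. f m y) = (\<Sum>y\<in>{a..<N}. \<Sum>m\<in>{a..y}. f m y)"
proof -
  have "(\<Sum>m\<in>{a..<N}. \<Sum>y\<in>{m..<N}. f m y) = (\<Sum>m\<in>{a..<N}. \<Sum>y\<in>{y. y \<in> {a..<N} \<and> m \<le> y}. f m y)"
    by (rule sum.cong[OF refl], rule sum.cong) (auto intro: order.trans)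
  also have "\<dots> = (\<Sum>y\<in>{a..<N}. \<Sum>m\<in>{m. m \<in> {a..<N} \<and> m \<le> y}. f m y)"
    by (rule sum.swap_restrict) auto
  also have "\<dots> = (\<Sum>y\<in>{a..<N}. \<Sum>m\<in>{a..y}. f m y)"
    by (rule sum.cong[OF refl], rule sum.cong) auto
  finally show ?thesis .
qed

lemma tri_swap_strict: "(\<Sum>m\<in>{a..<N::nat}. \<Sum>y\<in>{Suc m..<N}. f m y) = (\<Sum>y\<in>{a..<N}. \<Sum>m\<in>{a..<y}. f m y)"
proof -
  have "(\<Sum>m\<in>{a..<N}. \<Sum>y\<in>{Suc m..<N}. f m y) = (\<Sum>m\<in>{a..<N}. \<Sum>y\<in>{y. y \<in> {a..<N} \<and> m < y}. f m y)"
    by (rule sum.cong[OF refl], rule sum.cong) auto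
  also have "\<dots> = (\<Sum>y\<in>{a..<N}. \<Sum>m\<in>{m. m \<in> {a..<N} \<and> m < y}. f m y)"
    by (rule sum.swap_restrict) auto
  also have "\<dots> = (\<Sum>y\<in>{a..<N}. \<Sum>m\<in>{a..<y}. f m y)"
    by (rule sum.cong[OF refl], rule sum.cong) auto
  finally show ?thesis .
qed

lemma TT_Suc: "1 \<le> m \<Longrightarrow> m < N \<Longrightarrow> TT N g (Suc m) = (\<Sum>y\<in>{m..<N}. Tc N (Suc m) y * g y)"
  unfolding TT_def by auto

lemma CF: "Vk N 1 (TT N g) s = (\<Sum>y\<in>{max 1 s..<N}. g y * K N (max 1 s) y)"
proof -
  let ?s = "max 1 s"
  have "Vk N 1 (TT N g) s = (\<Sum>m\<in>{?s..<N}. \<Sum>y\<in>{m..<N}. Tc N (Suc m) y * g y / real m)"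
    unfolding Vk_def by (rule sum.cong[OF refl]) (auto simp: TT_Suc sum_divide_distrib)
  also have "\<dots> = (\<Sum>y\<in>{?s..<N}. \<Sum>m\<in>{?s..y}. Tc N (Suc m) y * g y / real m)"
    by (rule tri_swap)
  also have "\<dots> = (\<Sum>y\<in>{?s..<N}. g y * K N ?s y)"
  proof (rule sum.cong[OF refl])
    fix y assume y: "y \<in> {?s..<N}"
    have "(\<Sum>m\<in>{?s..y}. Tc N (Suc m) y * g y / real m) = g y * (\<Sum>m\<in>{?s..y}. Tc N (Suc m) y / real m)"
      by (simp add: sum_distrib_left mult_ac)
    also have "\<dots> = g y * K N ?s y" using y by (subst Gc) auto
    finally show "(\<Sum>m\<in>{?s..y}. Tc N (Suc m) y * g y / real m) = g y * K N ?s y" .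
  qed
  finally show ?thesis .
qed

lemma B2: "Vk N 1 (TT N g) s = TT N (Osp N True g) s"
proof (cases "2 \<le> s \<and> s \<le> N")
  case True
  then have ms: "max 1 s = s" by simp
  have "TT N (Osp N True g) s = (\<Sum>t\<in>{s-1..<N}. \<Sum>y\<in>{Suc t..<N}. Tc N s t * (wt N True y * g y))"
    unfolding TT_def Osp_def using True by (simp add: sum_distrib_left)
  also have "\<dots> = (\<Sum>y\<in>{s-1..<N}. \<Sum>t\<in>{s-1..<y}. Tc N s t * (wt N True y * g y))"
    by (rule tri_swap_strict)
  also have "\<dots> = (\<Sum>y\<in>{s-1..<N}. g y * K N s y)"
  proof (rule sum.cong[OF refl])
    fix y assume y: "y \<in> {s-1..<N}"
    have "(\<Sum>t\<in>{s-1..<y}. Tc N s t * (wt N True y * g y)) = (\<Sum>t\<in>{s-1..<y}. Tc N s t) * (wt N True y * g y)"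
      by (simp add: sum_distrib_right)
    also have "\<dots> = g y * K N s y"
    proof -
      have "2 \<le> s" using True by simp
      show ?thesis unfolding L6[where s=s and y=y and N=N, OF \<open>2 \<le> s\<close>] K_def wt_def by (simp add: field_simps)
    qed
    finally show "(\<Sum>t\<in>{s-1..<y}. Tc N s t * (wt N True y * g y)) = g y * K N s y" .
  qed
  also have "\<dots> = (\<Sum>y\<in>{s..<N}. g y * K N s y)"
  proof -
    have "{s-1..<N} = insert (s-1) {s..<N}" using True by auto
    moreover have "K N s (s - 1) = 0"
    proof -
      have "(s - 1 - 1) choose (s - 1) = 0" by (rule binomial_eq_0) (use True in linarith)
      then show ?thesis unfolding K_def by simp
    qed
    moreover have "s - 1 \<notin> {s..<N}" using True by auto
    ultimately show ?thesis by simp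
  qed
  finally show ?thesis unfolding CF ms by simp
next
  case False
  show ?thesis
  proof (cases "s \<le> 1")
    case True
    then have ms: "max 1 s = 1" and s1: "Suc (s - 1) = 1" by auto
    have "TT N (Osp N True g) s = (\<Sum>y\<in>{1..<N}. wt N True y * g y)"
      unfolding TT_def Osp_def using True by simp
    also have "\<dots> = (\<Sum>y\<in>{1..<N}. g y * K N 1 y)"
      by (rule sum.cong) (auto simp: K_def wt_def)
    finally show ?thesis unfolding CF ms by simp
  next
    case False
    then have "s > N" using \<open>\<not> (2 \<le> s \<and> s \<le> N)\<close> by auto
    then show ?thesis unfolding CF TT_def Osp_def by auto
  qed
qed

lemma B3:
  assumes "1 \<le> m" "m < N"
  shows "TT N g (Suc m) / real m = TT N (Wp N False g) (Suc m)"
proof -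
  have "TT N (Wp N False g) (Suc m) = (\<Sum>t\<in>{m..<N}. \<Sum>y\<in>{t..<N}. Tc N (Suc m) t * (g y / real y))"
    unfolding TT_Suc[OF assms] Wp_def wt_def
    by (rule sum.cong[OF refl]) (use assms in \<open>auto simp: sum_distrib_left intro!: sum.cong\<close>)
  also have "\<dots> = (\<Sum>y\<in>{m..<N}. \<Sum>t\<in>{m..y}. Tc N (Suc m) t * (g y / real y))"
    by (rule tri_swap)
  also have "\<dots> = (\<Sum>y\<in>{m..<N}. Tc N (Suc m) y * g y / real m)"
  proof (rule sum.cong[OF refl])
    fix y assume y: "y \<in> {m..<N}"
    have "(\<Sum>t\<in>{m..y}. Tc N (Suc m) t) = real (y choose m) / real ((N - 1) choose m)"
    proof -
      have "(\<Sum>t\<in>{Suc (m - 1)..y}. (t - 1) choose (m - 1)) = y choose Suc (m - 1)" by (rule hockey)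
      moreover have "Suc (m - 1) = m" using assms by simp
      ultimately have "(\<Sum>t\<in>{m..y}. real ((t - 1) choose (m - 1))) = real (y choose m)"
        by (metis of_nat_sum)
      moreover have "\<And>t. Tc N (Suc m) t = real ((t - 1) choose (m - 1)) / real ((N - 1) choose m)"
        unfolding Tc_def using assms by (simp add: numeral_2_eq_2)
      ultimately show ?thesis by (simp add: sum_divide_distrib[symmetric])
    qed
    moreover have cm: "real m * real (y choose m) = real y * real ((y - 1) choose (m - 1))"
    proof -
      have "m * (y choose m) = y * ((y - 1) choose (m - 1))" by (rule times_binomial_minus1_eq) (use assms in simp)
      then show ?thesis by (metis of_nat_mult)
    qed
    moreover have nz: "real y \<noteq> 0" "real m \<noteq> 0" "real ((N - 1) choose m) \<noteq> 0" using y assms by auto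
    moreover have "Tc N (Suc m) y = real ((y - 1) choose (m - 1)) / real ((N - 1) choose m)"
      unfolding Tc_def using assms by (simp add: numeral_2_eq_2)
    ultimately have key: "(\<Sum>t\<in>{m..y}. Tc N (Suc m) t) / real y = Tc N (Suc m) y / real m"
    proof -
      assume S: "(\<Sum>t\<in>{m..y}. Tc N (Suc m) t) = real (y choose m) / real ((N - 1) choose m)"
        and T: "Tc N (Suc m) y = real ((y - 1) choose (m - 1)) / real ((N - 1) choose m)"
      define P where "P = real (y choose m)"
      define Q where "Q = real ((y - 1) choose (m - 1))"
      define C where "C = real ((N - 1) choose m)"
      have cm': "real m * P = real y * Q" using cm unfolding P_def Q_def .
      have "P / C / real y = (real m * P) / (C * real y * real m)" using nz by (simp add: C_def)
      also have "\<dots> = (real y * Q) / (C * real y * real m)" unfolding cm' ..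
      also have "\<dots> = Q / C / real m" using nz by (simp add: C_def)
      finally show ?thesis unfolding S T P_def[symmetric] Q_def[symmetric] C_def[symmetric] .
    qed
    have "(\<Sum>t\<in>{m..y}. Tc N (Suc m) t * (g y / real y)) = (\<Sum>t\<in>{m..y}. Tc N (Suc m) t) * (g y / real y)"
      by (rule sum_distrib_right[symmetric])
    also have "\<dots> = (\<Sum>t\<in>{m..y}. Tc N (Suc m) t) / real y * g y" by simp
    also have "\<dots> = Tc N (Suc m) y * g y / real m" unfolding key by simp
    finally show "(\<Sum>t\<in>{m..y}. Tc N (Suc m) t * (g y / real y)) = Tc N (Suc m) y * g y / real m" .
  qed
  also have "\<dots> = TT N g (Suc m) / real m"
    unfolding TT_Suc[OF assms] by (simp add: sum_divide_distrib)
  finally show ?thesis by simp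
qed

lemma Vk_Suc: "Vk N (Suc k) (TT N g) s = Vk N k (TT N (Wp N False g)) s"
  unfolding Vk_def
proof (rule sum.cong[OF refl])
  fix m assume m: "m \<in> {max 1 s..<N}"
  then have "1 \<le> m" "m < N" by auto
  then show "TT N g (Suc m) / real m ^ Suc k = TT N (Wp N False g) (Suc m) / real m ^ k"
    using B3[of m N g] by (simp add: field_simps)
qed

lemma Vk_pow: "Vk N (Suc b) (TT N g) s = Vk N 1 (TT N ((Wp N False ^^ b) g)) s"
proof (induction b arbitrary: g)
  case 0 then show ?case by simp
next
  case (Suc b)
  have "Vk N (Suc (Suc b)) (TT N g) s = Vk N (Suc b) (TT N (Wp N False g)) s" by (rule Vk_Suc)
  also have "\<dots> = Vk N 1 (TT N ((Wp N False ^^ b) (Wp N False g))) s" by (rule Suc.IH)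
  also have "(Wp N False ^^ b) (Wp N False g) = (Wp N False ^^ Suc b) g" by (simp only: funpow_Suc_right comp_def)
  finally show ?case .
qed

lemma B1: "U N (Vk N 1 (TT N g)) s = Vk N 1 (TT N (Wp N True g)) s"
proof -
  let ?s = "max 1 s"
  have "U N (Vk N 1 (TT N g)) s = (\<Sum>n\<in>{?s..<N}. \<Sum>y\<in>{n..<N}. g y * (K N (Suc n) y / real n + K N n y / (real N - real n)))"
    unfolding U_def
  proof (rule sum.cong[OF refl])
    fix n assume n: "n \<in> {?s..<N}"
    then have n1: "1 \<le> n" by auto
    have a: "Vk N 1 (TT N g) (Suc n) = (\<Sum>y\<in>{n..<N}. g y * K N (Suc n) y)"
    proof -
      have "Vk N 1 (TT N g) (Suc n) = (\<Sum>y\<in>{Suc n..<N}. g y * K N (Suc n) y)" unfolding CF by simp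
      also have "\<dots> = (\<Sum>y\<in>{n..<N}. g y * K N (Suc n) y)"
      proof (cases "n < N")
        case True
        then have "{n..<N} = insert n {Suc n..<N}" by auto
        moreover have "K N (Suc n) n = 0" using n1 by (simp add: K_zero)
        ultimately show ?thesis by simp
      qed simp
      finally show ?thesis .
    qed
    have b: "Vk N 1 (TT N g) n = (\<Sum>y\<in>{n..<N}. g y * K N n y)" unfolding CF using n1 by simp
    show "Vk N 1 (TT N g) (Suc n) / real n + Vk N 1 (TT N g) n / (real N - real n) =
        (\<Sum>y\<in>{n..<N}. g y * (K N (Suc n) y / real n + K N n y / (real N - real n)))"
      unfolding a b by (simp add: sum_divide_distrib sum.distrib[symmetric] algebra_simps)
  qed
  also have "\<dots> = (\<Sum>y\<in>{?s..<N}. \<Sum>n\<in>{?s..y}. g y * (K N (Suc n) y / real n + K N n y / (real N - real n)))"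
    by (rule tri_swap)
  also have "\<dots> = (\<Sum>y\<in>{?s..<N}. \<Sum>t\<in>{?s..y}. wt N True y * g y * K N ?s t)"
  proof (rule sum.cong[OF refl])
    fix y assume y: "y \<in> {?s..<N}"
    have "(\<Sum>n\<in>{?s..y}. g y * (K N (Suc n) y / real n + K N n y / (real N - real n)))
        = g y * (\<Sum>n\<in>{?s..y}. K N (Suc n) y / real n + K N n y / (real N - real n))"
      by (simp add: sum_distrib_left)
    also have "\<dots> = g y * ((\<Sum>t\<in>{?s..y}. K N ?s t) / (real N - real y))"
      using y by (subst L7) auto
    also have "\<dots> = (\<Sum>t\<in>{?s..y}. wt N True y * g y * K N ?s t)"
      by (simp add: wt_def sum_distrib_left sum_divide_distrib)
    finally show "(\<Sum>n\<in>{?s..y}. g y * (K N (Suc n) y / real n + K N n y / (real N - real n))) = (\<Sum>t\<in>{?s..y}. wt N True y * g y * K N ?s t)" .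
  qed
  also have "\<dots> = (\<Sum>t\<in>{?s..<N}. \<Sum>y\<in>{t..<N}. wt N True y * g y * K N ?s t)"
    by (rule tri_swap[symmetric])
  also have "\<dots> = Vk N 1 (TT N (Wp N True g)) s"
    unfolding CF
  proof (rule sum.cong[OF refl])
    fix t assume t: "t \<in> {?s..<N}"
    then have "max 1 t = t" by auto
    then show "(\<Sum>y\<in>{t..<N}. wt N True y * g y * K N ?s t) = Wp N True g t * K N ?s t"
      unfolding Wp_def by (simp add: sum_distrib_right)
  qed
  finally show ?thesis .
qed

lemma U_pow: "(U N ^^ j) (Vk N 1 (TT N g)) s = Vk N 1 (TT N ((Wp N True ^^ j) g)) s"
proof (induction j arbitrary: s)
  case 0 then show ?case by simp
next
  case (Suc j)
  have "(U N ^^ Suc j) (Vk N 1 (TT N g)) s = U N ((U N ^^ j) (Vk N 1 (TT N g))) s" by simp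
  also have "(U N ^^ j) (Vk N 1 (TT N g)) = Vk N 1 (TT N ((Wp N True ^^ j) g))" using Suc.IH by auto
  also have "U N (Vk N 1 (TT N ((Wp N True ^^ j) g))) s = Vk N 1 (TT N (Wp N True ((Wp N True ^^ j) g))) s" by (rule B1)
  finally show ?case by simp
qed

lemma zc_single: "k \<ge> 2 \<Longrightarrow> zc N [k] \<psi> = Vk N k \<psi>"
  by (rule ext) (simp add: Vk_def)

lemma zc_one: "zc N (1 # ks) \<phi> = U N (zc N ks \<phi>)"
  by (rule ext) (simp add: U_def)

lemma zc_rep: "k \<ge> 2 \<Longrightarrow> zc N (replicate j 1 @ [k]) \<psi> = (U N ^^ j) (Vk N k \<psi>)"
proof (induction j)
  case 0 then show ?case by (simp add: zc_single)
next
  case (Suc j)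
  have "zc N (replicate (Suc j) 1 @ [k]) \<psi> = U N (zc N (replicate j 1 @ [k]) \<psi>)"
    by (simp only: replicate_Suc append_Cons zc_one)
  then show ?case using Suc by simp
qed

lemma TT_block:
  assumes "a \<ge> 1" "b \<ge> 1"
  shows "zc N (blk a b) (TT N g) s = TT N (G N a b g) s"
proof -
  have bk: "blk a b = replicate (a - 1) 1 @ [Suc b]" unfolding blk_def by simp
  have "zc N (blk a b) (TT N g) s = (U N ^^ (a - 1)) (Vk N (Suc b) (TT N g)) s"
    unfolding bk using assms by (subst zc_rep) auto
  also have "Vk N (Suc b) (TT N g) = Vk N 1 (TT N ((Wp N False ^^ b) g))"
    by (rule ext) (rule Vk_pow)
  also have "(U N ^^ (a - 1)) (Vk N 1 (TT N ((Wp N False ^^ b) g))) s = Vk N 1 (TT N ((Wp N True ^^ (a - 1)) ((Wp N False ^^ b) g))) s"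
    by (rule U_pow)
  also have "\<dots> = TT N (G N a b g) s" unfolding B2 G_def ..
  finally show ?thesis .
qed

lemma TT_lin: "TT N (\<lambda>y. f y - c * h y - d * k y) s = TT N f s - c * TT N h s - d * TT N k s"
  unfolding TT_def by (simp add: sum_subtractf sum_distrib_left sum.distrib algebra_simps)

lemma TT_cong: "(\<And>y. f y = h y) \<Longrightarrow> TT N f s = TT N h s"
  by (metis ext)

lemma block:
  assumes "a \<ge> 1" "b \<ge> 1" "N \<ge> 1"
  shows "zc N (blk a b) (TT N g) s - (if 1 < b then zc N (blk a (b - 1)) (TT N g) s / real N else 0)
       - (if 1 < a then zc N (blk (a - 1) b) (TT N g) s / real N else 0)
     = TT N (\<lambda>y. hc N [a,b] True g y + (if a = 1 \<and> b = 1 then - (g y / real N ^ 2) else 0)) s"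
proof -
  define cb where "cb = (if 1 < b then 1 / real N else 0)"
  define ca where "ca = (if 1 < a then 1 / real N else 0)"
  have e1: "(if 1 < b then zc N (blk a (b - 1)) (TT N g) s / real N else 0) = cb * TT N (G N a (b - 1) g) s"
    unfolding cb_def using TT_block[of a "b - 1" N g s] assms by auto
  have e2: "(if 1 < a then zc N (blk (a - 1) b) (TT N g) s / real N else 0) = ca * TT N (G N (a - 1) b g) s"
    unfolding ca_def using TT_block[of "a - 1" b N g s] assms by auto
  have "zc N (blk a b) (TT N g) s - (if 1 < b then zc N (blk a (b - 1)) (TT N g) s / real N else 0)
       - (if 1 < a then zc N (blk (a - 1) b) (TT N g) s / real N else 0)
     = TT N (\<lambda>y. G N a b g y - cb * G N a (b - 1) g y - ca * G N (a - 1) b g y) s"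
    unfolding e1 e2 TT_lin TT_block[OF assms(1,2)] ..
  also have "\<dots> = TT N (\<lambda>y. hc N [a,b] True g y + (if a = 1 \<and> b = 1 then - (g y / real N ^ 2) else 0)) s"
  proof (rule TT_cong)
    fix y
    have "G N a b g y - cb * G N a (b - 1) g y - ca * G N (a - 1) b g y
        = G N a b g y - (if 1 < b then G N a (b - 1) g y / real N else 0) - (if 1 < a then G N (a - 1) b g y / real N else 0)"
      unfolding ca_def cb_def by simp
    also have "\<dots> = hc N [a,b] True g y + (if a = 1 \<and> b = 1 then - (g y / real N ^ 2) else 0)"
      by (rule R_identity[OF assms])
    finally show "G N a b g y - cb * G N a (b - 1) g y - ca * G N (a - 1) b g y = hc N [a,b] True g y + (if a = 1 \<and> b = 1 then - (g y / real N ^ 2) else 0)" .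
  qed
  finally show ?thesis .
qed

lemma Lg_Nil: "Lg N [] \<psi> = \<psi>"
proof -
  have "LA [] = {{}}" unfolding LA_def by auto
  then show ?thesis unfolding Lg_def by (auto simp: fun_eq_iff zidx_def minus_delta_def)
qed

lemma Rg_Nil: "Rg N [] g = g"
proof -
  have "RA [] = {{}}" unfolding RA_def odd_even_def by auto
  then show ?thesis unfolding Rg_def by (auto simp: fun_eq_iff delete_pos_def)
qed

lemma main_ind:
  assumes N: "N \<ge> 1"
  shows "length c = 2 * n \<Longrightarrow> (\<forall>x\<in>set c. x \<ge> 1) \<Longrightarrow> Lg N c (TT N g) s = TT N (Rg N c g) s"
proof (induction n arbitrary: c g s)
  case 0
  then show ?case by (simp add: Lg_Nil Rg_Nil)
next
  case (Suc n)
  then obtain a b c' where c: "c = a # b # c'" and len: "length c' = 2 * n"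
    by (cases c; cases "tl c") auto
  have ab: "a \<ge> 1" "b \<ge> 1" "\<forall>x\<in>set c'. x \<ge> 1" using Suc.prems c by auto
  have IH: "Lg N c' (TT N g) = TT N (Rg N c' g)" using Suc.IH[OF len ab(3)] by auto
  have "Lg N c (TT N g) s = zc N (blk a b) (TT N (Rg N c' g)) s
     - (if 1 < b then zc N (blk a (b - 1)) (TT N (Rg N c' g)) s / real N else 0)
     - (if 1 < a then zc N (blk (a - 1) b) (TT N (Rg N c' g)) s / real N else 0)"
    unfolding c Lg_Cons2 IH ..
  also have "\<dots> = TT N (\<lambda>y. hc N [a,b] True (Rg N c' g) y + (if a = 1 \<and> b = 1 then - (Rg N c' g y / real N ^ 2) else 0)) s"
    by (rule block[OF ab(1,2) N])
  also have "(\<lambda>y. hc N [a,b] True (Rg N c' g) y + (if a = 1 \<and> b = 1 then - (Rg N c' g y / real N ^ 2) else 0)) = Rg N c g"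
    unfolding c by (rule ext) (simp only: Rg_Cons2)
  finally show ?case .
qed

lemma TT1: "TT N (\<lambda>_. 1) s = 1"
proof (cases "2 \<le> s \<and> s \<le> N")
  case T: True
  note True = T
  have "(\<Sum>y\<in>{s-1..<N}. Tc N s y * 1) = (\<Sum>y\<in>{s-1..<N}. Tc N s y)" by simp
  also have "\<dots> = real ((N - 1) choose (s - 1)) / real ((N - 1) choose (s - 1))"
    using L6[where s=s and y=N and N=N] True by simp
  also have "\<dots> = 1"
  proof -
    have "\<not> N - 1 < s - 1" using True by linarith
    then show ?thesis by simp
  qed
  finally have "(\<Sum>y\<in>{s-1..<N}. Tc N s y * 1) = 1" .
  then show ?thesis unfolding TT_def if_P[OF T] .
next
  case False then show ?thesis unfolding TT_def if_not_P[OF False] by simp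
qed

lemma set_delete_pos: "set (delete_pos c A) \<subseteq> set c"
  unfolding delete_pos_def by auto

theorem mainTheorem17:
  fixes N s :: nat and c :: "nat list"
  assumes "N \<ge> 1" and "s \<ge> 1" and "length c = 2*s" and "\<forall>x\<in>set c. x \<ge> 1"
  shows "(\<Sum>A\<in>{A. A \<subseteq> {i\<in>{1..2*s}. c ! (i-1) > 1} \<and> (\<forall>r\<in>{1..s}. \<not> {2*r-1, 2*r} \<subseteq> A)}.
            (-1) ^ card A / real N ^ card A * fN N (minus_delta c A))
       = (\<Sum>A\<in>{A. A \<subseteq> {i\<in>{1..2*s}. c ! (i-1) = 1} \<and> odd_even A}.
            (-1) ^ (card A div 2) / real N ^ card A * hN N (delete_pos c A))"
proof -
  have L: "{A. A \<subseteq> {i\<in>{1..2*s}. c ! (i-1) > 1} \<and> (\<forall>r\<in>{1..s}. \<not> {2*r-1, 2*r} \<subseteq> A)} = LA c"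
    unfolding LA_def using assms(3) by simp
  have R: "{A. A \<subseteq> {i\<in>{1..2*s}. c ! (i-1) = 1} \<and> odd_even A} = RA c"
    unfolding RA_def using assms(3) by simp
  have "(\<Sum>A\<in>LA c. (-1) ^ card A / real N ^ card A * fN N (minus_delta c A)) = Lg N c (\<lambda>_. 1) 1"
    unfolding Lg_def fN_zc ..
  also have "Lg N c (\<lambda>_. 1) 1 = Lg N c (TT N (\<lambda>_. 1)) 1"
  proof -
    have e: "TT N (\<lambda>_. 1) = (\<lambda>_. 1)" by (rule ext) (rule TT1)
    show ?thesis unfolding e ..
  qed
  also have "Lg N c (TT N (\<lambda>_. 1)) 1 = TT N (Rg N c (\<lambda>_. 1)) 1"
    by (rule main_ind[OF assms(1,3,4)])
  also have "\<dots> = Rg N c (\<lambda>_. 1) 0" unfolding TT_def by simp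
  also have "\<dots> = (\<Sum>A\<in>RA c. (-1) ^ (card A div 2) / real N ^ card A * hN N (delete_pos c A))"
    unfolding Rg_def
  proof (rule sum.cong[OF refl])
    fix A
    have "\<forall>x\<in>set (delete_pos c A). x \<ge> 1" using set_delete_pos assms(4) by blast
    then show "(-1) ^ (card A div 2) / real N ^ card A * hc N (delete_pos c A) True (\<lambda>_. 1) 0 =
        (-1) ^ (card A div 2) / real N ^ card A * hN N (delete_pos c A)"
      using hN_hc assms(1) by simp
  qed
  finally show ?thesis unfolding L R .
qed

end
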